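(* Let $3\le n\le N$. For every $x$ at which all the functions $\Theta_n,\Lambda_n(\cdot;i,k)$ ($i,k\in\{1,2\}$) are defined at both $x+1$ and $x$ and $\Lambda_n(x+1;1,1)\neq0$, $$\widetilde{\mathcal F}_n(x)\,\Delta\nabla\mathbb K_n(x)+\widetilde{\mathcal G}_n(x)\,\Delta\mathbb K_n(x)+\widetilde{\mathcal H}_n(x)\,\mathbb K_n(x)=0,$$ where $\widetilde{\mathcal F}_n(x)=\mathcal F_n(x+1)$, $\widetilde{\mathcal G}_n(x)=\mathcal G_n(x+1)+\mathcal H_n(x+1)$, $\widetilde{\mathcal H}_n(x)=\mathcal H_n(x+1)$, and $\mathcal F_n(x)=\Theta_n(x)\Theta_n(x-1)$, $\mathcal G_n(x)=\Theta_n(x)\big(\nabla\Theta_n(x)+\Lambda_n(x-1;2,1)+\Lambda_n(x;1,2)\big)-\frac{\nabla\Lambda_n(x;1,1)\,(\Theta_n(x)+\Lambda_n(x;1,2))\Theta_n(x)}{\Lambda_n(x;1,1)}$, $\mathcal H_n(x)=\Theta_n(x)\nabla\Lambda_n(x;2,1)+\Lambda_n(x;1,2)\Lambda_n(x;2,1)-\frac{\nabla\Lambda_n(x;1,1)\,\Lambda_n(x;2,1)(\Theta_n(x)+\Lambda_n(x;1,2))}{\Lambda_n(x;1,1)}-\Lambda_n(x-1;1,1)\Lambda_n(x;2,2)$.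
   Context: Fix an integer $N\ge 1$ and $0<p<1$. Notation: $(a)_0=1$, $(a)_k=a(a+1)\cdots(a+k-1)$ (Pochhammer symbol); $[z]_0=1$, $[z]_k=z(z-1)\cdots(z-k+1)$ (falling factorial). For a function $f$, $\Delta f(x)=f(x+1)-f(x)$, $\nabla f(x)=f(x)-f(x-1)$, $\Delta^0$ is the identity and $\Delta^k=\Delta\circ\Delta^{k-1}$. For $0\le n\le N$ the monic Kravchuk polynomial is $K_n(x)=p^n(-N)_n\sum_{k=0}^{n}\frac{(-n)_k(-x)_k}{(-N)_k\,k!}p^{-k}$, and $K_{-1}=0$; these are monic of degree $n$ and orthogonal on $\{0,\dots,N\}$ with respect to the binomial weight $w(x)=\binom{N}{x}p^x(1-p)^{N-x}$, with $\|K_n\|^2=\sum_{x=0}^N K_n(x)^2w(x)=n!(-N)_np^n(p-1)^n$. They satisfy $xK_n=K_{n+1}+\alpha_nK_n+\beta_nK_{n-1}$ with $\alpha_n=p(N-n)+n(1-p)$, $\beta_n=np(1-p)(N-n+1)$. For $1\le n\le N+1$ and integers $i,l\ge0$, $\mathscr K_{n-1}^{(i,l)}(x,y)=\sum_{k=0}^{n-1}\frac{\Delta^iK_k(x)\,\Delta^lK_k(y)}{\|K_k\|^2}$. Fix $\lambda,\mu>0$ and an integer $j\ge 0$. On real polynomials define $\langle f,g\rangle_{\lambda,\mu}=\sum_{x=0}^N f(x)g(x)w(x)+\lambda\Delta^jf(0)\Delta^jg(0)+\mu\Delta^jf(N)\Delta^jg(N)$. For $0\le n\le N$, $\mathbb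 K_n=\mathbb K_n^{(j)}$ is the monic polynomial of degree $n$ with $\langle\mathbb K_n,q\rangle_{\lambda,\mu}=0$ for all polynomials $q$ of degree $<n$ (Kravchuk–Sobolev polynomials). For $1\le n\le N$: $\mathscr A_n(x,y)=\frac{j!}{\|K_{n-1}\|^2[x-y]_{j+1}}\sum_{k=0}^{j}\frac{\Delta^kK_{n-1}(y)}{k!}[x-y]_k$, $\mathscr B_n(x,y)=-\frac{j!}{\|K_{n-1}\|^2[x-y]_{j+1}}\sum_{k=0}^{j}\frac{\Delta^kK_{n}(y)}{k!}[x-y]_k$; $k_{00}=\mathscr K^{(j,j)}_{n-1}(0,0)$, $k_{0N}=\mathscr K^{(j,j)}_{n-1}(0,N)$, $k_{N0}=\mathscr K^{(j,j)}_{n-1}(N,0)$, $k_{NN}=\mathscr K^{(j,j)}_{n-1}(N,N)$, $d_0=\Delta^jK_n(0)$, $d_N=\Delta^jK_n(N)$, $\delta_n=(1+\lambda k_{00})(1+\mu k_{NN})-\lambda\mu k_{0N}k_{N0}$ (which is nonzero), $\Phi_1(n)=\frac{d_0(1+\mu k_{NN})-\mu k_{0N}d_N}{\delta_n}$, $\Phi_2(n)=\frac{(1+\lambda k_{00})d_N-\lambda k_{N0}d_0}{\delta_n}$; $\mathscr C_{1,n}(x)=1-\lambda\Phi_1(n)\mathscr A_n(x,0)-\mu\Phi_2(n)\mathscr A_n(x,N)$ and $\mathscr D_{1,n}(x)=-\lambda\Phi_1(n)\mathscr B_n(x,0)-\mu\Phi_2(n)\mathscr B_n(x,N)$. For $2\le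 m\le N$ define $\mathscr E_{1,m}(x)=x\nabla\mathscr C_{1,m}(x)+m\,\mathscr C_{1,m}(x-1)-\frac{(m-1)p(N-m+2)\mathscr D_{1,m}(x-1)}{\beta_{m-1}}$ and $\mathscr F_{1,m}(x)=x\nabla\mathscr D_{1,m}(x)+mp(N-m+1)\mathscr C_{1,m}(x-1)+\frac{(m-1)p(N-m+2)(x-\alpha_{m-1})\mathscr D_{1,m}(x-1)}{\beta_{m-1}}+(m-1)\mathscr D_{1,m}(x-1)$. For $3\le n\le N$ define $\mathscr C_{2,n}(x)=-\frac{\mathscr D_{1,n-1}(x)}{\beta_{n-1}}$, $\mathscr D_{2,n}(x)=\mathscr C_{1,n-1}(x)+\mathscr C_{2,n}(x)(\alpha_{n-1}-x)$, $\mathscr E_{2,n}(x)=-\frac{\mathscr F_{1,n-1}(x)}{\beta_{n-1}}$, $\mathscr F_{2,n}(x)=\mathscr E_{1,n-1}(x)+\mathscr E_{2,n}(x)(\alpha_{n-1}-x)$, and $\Theta_n(x)=x\big(\mathscr C_{1,n}(x)\mathscr D_{2,n}(x)-\mathscr C_{2,n}(x)\mathscr D_{1,n}(x)\big)$, $\Lambda_n(x;i,k)=(-1)^k\big(\mathscr E_{k,n}(x)\mathscr D_{i,n}(x)-\mathscr F_{k,n}(x)\mathscr C_{i,n}(x)\big)$ for $i,k\in\{1,2\}$. *)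

theory Defs
  imports "HOL-Computational_Algebra.Polynomial"
begin

definition fdiff :: "(real \<Rightarrow> real) \<Rightarrow> real \<Rightarrow> real" where
  "fdiff f x = f (x + 1) - f x"

definition bdiff :: "(real \<Rightarrow> real) \<Rightarrow> real \<Rightarrow> real" where
  "bdiff f x = f x - f (x - 1)"

definition fdiffs :: "nat \<Rightarrow> (real \<Rightarrow> real) \<Rightarrow> real \<Rightarrow> real" where
  "fdiffs k f = (fdiff ^^ k) f"

definition ffall :: "real \<Rightarrow> nat \<Rightarrow> real" where
  "ffall z k = (\<Prod>i<k. z - real i)"

definition bweight :: "nat \<Rightarrow> real \<Rightarrow> nat \<Rightarrow> real" where
  "bweight N p x = real (N choose x) * p ^ x * (1 - p) ^ (N - x)"

definition krav :: "nat \<Rightarrow> real \<Rightarrow> nat \<Rightarrow> real \<Rightarrow> real" where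
  "krav N p n x = p ^ n * pochhammer (- real N) n *
     (\<Sum>k\<le>n. pochhammer (- real n) k * pochhammer (- x) k
              / (pochhammer (- real N) k * fact k) * inverse p ^ k)"

definition knorm2 :: "nat \<Rightarrow> real \<Rightarrow> nat \<Rightarrow> real" where
  "knorm2 N p n = (\<Sum>x\<le>N. (krav N p n (real x))\<^sup>2 * bweight N p x)"

definition kalpha :: "nat \<Rightarrow> real \<Rightarrow> nat \<Rightarrow> real" where
  "kalpha N p n = p * (real N - real n) + real n * (1 - p)"

definition kbeta :: "nat \<Rightarrow> real \<Rightarrow> nat \<Rightarrow> real" where
  "kbeta N p n = real n * p * (1 - p) * (real N - real n + 1)"

text \<open>kker N p m i l x y is the kernel with index m = n-1, i.e. sum over k = 0..m.\<close>
definition kker :: "nat \<Rightarrow> real \<Rightarrow> nat \<Rightarrow> nat \<Rightarrow> nat \<Rightarrow> real \<Rightarrow> real \<Rightarrow> real" where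
  "kker N p m i l x y =
     (\<Sum>k\<le>m. fdiffs i (krav N p k) x * fdiffs l (krav N p k) y / knorm2 N p k)"

definition sip :: "nat \<Rightarrow> real \<Rightarrow> real \<Rightarrow> real \<Rightarrow> nat \<Rightarrow> real poly \<Rightarrow> real poly \<Rightarrow> real" where
  "sip N p lam mu j f g =
     (\<Sum>x\<le>N. poly f (real x) * poly g (real x) * bweight N p x)
     + lam * fdiffs j (poly f) 0 * fdiffs j (poly g) 0
     + mu * fdiffs j (poly f) (real N) * fdiffs j (poly g) (real N)"

definition KS :: "nat \<Rightarrow> real \<Rightarrow> real \<Rightarrow> real \<Rightarrow> nat \<Rightarrow> nat \<Rightarrow> real poly" where
  "KS N p lam mu j n = (THE q. lead_coeff q = 1 \<and> degree q = n \<and>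
       (\<forall>r. degree r < n \<longrightarrow> sip N p lam mu j q r = 0))"

definition Ascr :: "nat \<Rightarrow> real \<Rightarrow> nat \<Rightarrow> nat \<Rightarrow> real \<Rightarrow> real \<Rightarrow> real" where
  "Ascr N p j n x y = fact j / (knorm2 N p (n - 1) * ffall (x - y) (j + 1)) *
     (\<Sum>k\<le>j. fdiffs k (krav N p (n - 1)) y / fact k * ffall (x - y) k)"

definition Bscr :: "nat \<Rightarrow> real \<Rightarrow> nat \<Rightarrow> nat \<Rightarrow> real \<Rightarrow> real \<Rightarrow> real" where
  "Bscr N p j n x y = - (fact j / (knorm2 N p (n - 1) * ffall (x - y) (j + 1))) *
     (\<Sum>k\<le>j. fdiffs k (krav N p n) y / fact k * ffall (x - y) k)"

definition deltaS :: "nat \<Rightarrow> real \<Rightarrow> real \<Rightarrow> real \<Rightarrow> nat \<Rightarrow> nat \<Rightarrow> real" where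
  "deltaS N p lam mu j n =
     (1 + lam * kker N p (n - 1) j j 0 0) * (1 + mu * kker N p (n - 1) j j (real N) (real N))
     - lam * mu * kker N p (n - 1) j j 0 (real N) * kker N p (n - 1) j j (real N) 0"

definition Phi1 :: "nat \<Rightarrow> real \<Rightarrow> real \<Rightarrow> real \<Rightarrow> nat \<Rightarrow> nat \<Rightarrow> real" where
  "Phi1 N p lam mu j n =
     (fdiffs j (krav N p n) 0 * (1 + mu * kker N p (n - 1) j j (real N) (real N))
      - mu * kker N p (n - 1) j j 0 (real N) * fdiffs j (krav N p n) (real N))
     / deltaS N p lam mu j n"

definition Phi2 :: "nat \<Rightarrow> real \<Rightarrow> real \<Rightarrow> real \<Rightarrow> nat \<Rightarrow> nat \<Rightarrow> real" where
  "Phi2 N p lam mu j n =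
     ((1 + lam * kker N p (n - 1) j j 0 0) * fdiffs j (krav N p n) (real N)
      - lam * kker N p (n - 1) j j (real N) 0 * fdiffs j (krav N p n) 0)
     / deltaS N p lam mu j n"

definition C1 :: "nat \<Rightarrow> real \<Rightarrow> real \<Rightarrow> real \<Rightarrow> nat \<Rightarrow> nat \<Rightarrow> real \<Rightarrow> real" where
  "C1 N p lam mu j n x = 1 - lam * Phi1 N p lam mu j n * Ascr N p j n x 0
                           - mu * Phi2 N p lam mu j n * Ascr N p j n x (real N)"

definition D1 :: "nat \<Rightarrow> real \<Rightarrow> real \<Rightarrow> real \<Rightarrow> nat \<Rightarrow> nat \<Rightarrow> real \<Rightarrow> real" where
  "D1 N p lam mu j n x = - lam * Phi1 N p lam mu j n * Bscr N p j n x 0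
                         - mu * Phi2 N p lam mu j n * Bscr N p j n x (real N)"

definition E1 :: "nat \<Rightarrow> real \<Rightarrow> real \<Rightarrow> real \<Rightarrow> nat \<Rightarrow> nat \<Rightarrow> real \<Rightarrow> real" where
  "E1 N p lam mu j m x =
     x * bdiff (C1 N p lam mu j m) x + real m * C1 N p lam mu j m (x - 1)
     - (real m - 1) * p * (real N - real m + 2) * D1 N p lam mu j m (x - 1) / kbeta N p (m - 1)"

definition F1 :: "nat \<Rightarrow> real \<Rightarrow> real \<Rightarrow> real \<Rightarrow> nat \<Rightarrow> nat \<Rightarrow> real \<Rightarrow> real" where
  "F1 N p lam mu j m x =
     x * bdiff (D1 N p lam mu j m) x
     + real m * p * (real N - real m + 1) * C1 N p lam mu j m (x - 1)
     + (real m - 1) * p * (real N - real m + 2) * (x - kalpha N p (m - 1))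
         * D1 N p lam mu j m (x - 1) / kbeta N p (m - 1)
     + (real m - 1) * D1 N p lam mu j m (x - 1)"

definition C2 :: "nat \<Rightarrow> real \<Rightarrow> real \<Rightarrow> real \<Rightarrow> nat \<Rightarrow> nat \<Rightarrow> real \<Rightarrow> real" where
  "C2 N p lam mu j n x = - D1 N p lam mu j (n - 1) x / kbeta N p (n - 1)"

definition D2 :: "nat \<Rightarrow> real \<Rightarrow> real \<Rightarrow> real \<Rightarrow> nat \<Rightarrow> nat \<Rightarrow> real \<Rightarrow> real" where
  "D2 N p lam mu j n x = C1 N p lam mu j (n - 1) x + C2 N p lam mu j n x * (kalpha N p (n - 1) - x)"

definition E2 :: "nat \<Rightarrow> real \<Rightarrow> real \<Rightarrow> real \<Rightarrow> nat \<Rightarrow> nat \<Rightarrow> real \<Rightarrow> real" where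
  "E2 N p lam mu j n x = - F1 N p lam mu j (n - 1) x / kbeta N p (n - 1)"

definition F2 :: "nat \<Rightarrow> real \<Rightarrow> real \<Rightarrow> real \<Rightarrow> nat \<Rightarrow> nat \<Rightarrow> real \<Rightarrow> real" where
  "F2 N p lam mu j n x = E1 N p lam mu j (n - 1) x + E2 N p lam mu j n x * (kalpha N p (n - 1) - x)"

definition Csel where "Csel N p lam mu j i = (if i = (1::nat) then C1 N p lam mu j else C2 N p lam mu j)"
definition Dsel where "Dsel N p lam mu j i = (if i = (1::nat) then D1 N p lam mu j else D2 N p lam mu j)"
definition Esel where "Esel N p lam mu j i = (if i = (1::nat) then E1 N p lam mu j else E2 N p lam mu j)"
definition Fsel where "Fsel N p lam mu j i = (if i = (1::nat) then F1 N p lam mu j else F2 N p lam mu j)"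

definition Theta :: "nat \<Rightarrow> real \<Rightarrow> real \<Rightarrow> real \<Rightarrow> nat \<Rightarrow> nat \<Rightarrow> real \<Rightarrow> real" where
  "Theta N p lam mu j n x =
     x * (C1 N p lam mu j n x * D2 N p lam mu j n x - C2 N p lam mu j n x * D1 N p lam mu j n x)"

definition Lambda :: "nat \<Rightarrow> real \<Rightarrow> real \<Rightarrow> real \<Rightarrow> nat \<Rightarrow> nat \<Rightarrow> nat \<Rightarrow> nat \<Rightarrow> real \<Rightarrow> real" where
  "Lambda N p lam mu j n i k x = (-1) ^ k *
     (Esel N p lam mu j k n x * Dsel N p lam mu j i n x
      - Fsel N p lam mu j k n x * Csel N p lam mu j i n x)"

definition calF :: "nat \<Rightarrow> real \<Rightarrow> real \<Rightarrow> real \<Rightarrow> nat \<Rightarrow> nat \<Rightarrow> real \<Rightarrow> real" where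
  "calF N p lam mu j n x = Theta N p lam mu j n x * Theta N p lam mu j n (x - 1)"

definition calG :: "nat \<Rightarrow> real \<Rightarrow> real \<Rightarrow> real \<Rightarrow> nat \<Rightarrow> nat \<Rightarrow> real \<Rightarrow> real" where
  "calG N p lam mu j n x =
     Theta N p lam mu j n x * (bdiff (Theta N p lam mu j n) x
        + Lambda N p lam mu j n 2 1 (x - 1) + Lambda N p lam mu j n 1 2 x)
     - bdiff (Lambda N p lam mu j n 1 1) x
        * (Theta N p lam mu j n x + Lambda N p lam mu j n 1 2 x) * Theta N p lam mu j n x
        / Lambda N p lam mu j n 1 1 x"

definition calH :: "nat \<Rightarrow> real \<Rightarrow> real \<Rightarrow> real \<Rightarrow> nat \<Rightarrow> nat \<Rightarrow> real \<Rightarrow> real" where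
  "calH N p lam mu j n x =
     Theta N p lam mu j n x * bdiff (Lambda N p lam mu j n 2 1) x
     + Lambda N p lam mu j n 1 2 x * Lambda N p lam mu j n 2 1 x
     - bdiff (Lambda N p lam mu j n 1 1) x * Lambda N p lam mu j n 2 1 x
        * (Theta N p lam mu j n x + Lambda N p lam mu j n 1 2 x)
        / Lambda N p lam mu j n 1 1 x
     - Lambda N p lam mu j n 1 1 (x - 1) * Lambda N p lam mu j n 2 2 x"

definition tF where "tF N p lam mu j n x = calF N p lam mu j n (x + 1)"
definition tG where "tG N p lam mu j n x = calG N p lam mu j n (x + 1) + calH N p lam mu j n (x + 1)"
definition tH where "tH N p lam mu j n x = calH N p lam mu j n (x + 1)"

text \<open>Definedness of Theta_n and Lambda_n(.;i,k) at a point t: all denominators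
  [t-y]_{j+1}, [t-1-y]_{j+1} (y in {0,N}) occurring in A_m, B_m (m = n, n-1) at the
  points t and t-1 are nonzero (the beta's are nonzero automatically).\<close>
definition defined_at :: "nat \<Rightarrow> nat \<Rightarrow> real \<Rightarrow> bool" where
  "defined_at N j t \<longleftrightarrow>
     (\<forall>s\<in>{t, t - 1}. \<forall>y\<in>{0, real N}. ffall (s - y) (j + 1) \<noteq> 0)"

end

theory Submission
  imports Defs
begin

lemma fdiffs_0[simp]: "fdiffs 0 f = f" by (simp add: fdiffs_def)
lemma fdiffs_Suc: "fdiffs (Suc k) f x = fdiffs k f (x+1) - fdiffs k f x"
  by (simp add: fdiffs_def fdiff_def)

lemma fdiffs_sum: "fdiffs k (\<lambda>x. \<Sum>i\<in>A. g i x) x = (\<Sum>i\<in>A. fdiffs k (g i) x)"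
proof (induction k arbitrary: x)
  case 0 then show ?case by simp
next
  case (Suc k) then show ?case by (simp add: fdiffs_Suc sum_subtractf)
qed

lemma fdiffs_cmult: "fdiffs k (\<lambda>x. c * f x) x = c * fdiffs k f x"
proof (induction k arbitrary: x)
  case 0 then show ?case by simp
next
  case (Suc k) then show ?case by (simp add: fdiffs_Suc right_diff_distrib)
qed

lemma fdiffs_add: "fdiffs k (\<lambda>x. f x + g x) x = fdiffs k f x + fdiffs k g x"
proof (induction k arbitrary: x)
  case 0 then show ?case by simp
next
  case (Suc k) then show ?case by (simp add: fdiffs_Suc)
qed

lemma fdiffs_diff: "fdiffs k (\<lambda>x. f x - g x) x = fdiffs k f x - fdiffs k g x"
proof (induction k arbitrary: x)
  case 0 then show ?case by simp
next
  case (Suc k) then show ?case by (simp add: fdiffs_Suc)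
qed

lemma fdiffs_cong: "(\<And>i. i \<le> k \<Longrightarrow> f (x + real i) = g (x + real i)) \<Longrightarrow> fdiffs k f x = fdiffs k g x"
proof (induction k arbitrary: x)
  case 0 then show ?case using 0[of 0] by simp
next
  case (Suc k)
  have a: "fdiffs k f (x+1) = fdiffs k g (x+1)"
    by (rule Suc.IH) (use Suc.prems[of "Suc _"] in \<open>auto simp: algebra_simps\<close>)
  have b: "fdiffs k f x = fdiffs k g x"
    by (rule Suc.IH) (use Suc.prems in auto)
  show ?case by (simp add: fdiffs_Suc a b)
qed

lemma ffall_0[simp]: "ffall z 0 = 1" by (simp add: ffall_def)
lemma ffall_Suc: "ffall z (Suc k) = ffall z k * (z - real k)"
  by (simp add: ffall_def)
lemma ffall_Suc': "ffall z (Suc k) = z * ffall (z - 1) k"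
  unfolding ffall_def prod.lessThan_Suc_shift by (simp add: algebra_simps)
lemma ffall_nz: "ffall z k \<noteq> 0 \<longleftrightarrow> (\<forall>i<k. z \<noteq> real i)"
  by (auto simp: ffall_def)

definition Tsum :: "(real \<Rightarrow> real) \<Rightarrow> real \<Rightarrow> nat \<Rightarrow> real \<Rightarrow> real" where
  "Tsum f x j y = (\<Sum>k\<le>j. fdiffs k f y / fact k * ffall (x - y) k)"

lemma Tsum_step:
  "(x - y) * (Tsum f x j (y+1) - Tsum f x j y) = fdiffs (Suc j) f y * ffall (x - y) (Suc j) / fact j"
proof (induction j)
  case 0 then show ?case by (simp add: Tsum_def fdiffs_Suc ffall_Suc algebra_simps)
next
  case (Suc j)
  define z where "z = x - y"
  have e1: "x - (y+1) = z - 1" by (simp add: z_def)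
  have T1: "Tsum f x (Suc j) (y+1) = Tsum f x j (y+1) + fdiffs (Suc j) f (y+1) / fact (Suc j) * ffall (z-1) (Suc j)"
    by (simp add: Tsum_def e1)
  have T2: "Tsum f x (Suc j) y = Tsum f x j y + fdiffs (Suc j) f y / fact (Suc j) * ffall z (Suc j)"
    by (simp add: Tsum_def z_def)
  have d: "fdiffs (Suc j) f (y+1) = fdiffs (Suc j) f y + fdiffs (Suc (Suc j)) f y"
    by (simp add: fdiffs_Suc)
  have f1: "z * ffall (z-1) (Suc j) = ffall z (Suc j) * (z - real (Suc j))"
    by (metis ffall_Suc ffall_Suc')
  have f2: "ffall z (Suc (Suc j)) = ffall z (Suc j) * (z - real (Suc j))"
    by (simp add: ffall_Suc)
  have IH: "z * (Tsum f x j (y+1) - Tsum f x j y) = fdiffs (Suc j) f y * ffall z (Suc j) / fact j"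
    using Suc by (simp add: z_def)
  have "z * (Tsum f x (Suc j) (y+1) - Tsum f x (Suc j) y) =
     z * (Tsum f x j (y+1) - Tsum f x j y) + (fdiffs (Suc j) f y + fdiffs (Suc (Suc j)) f y) / fact (Suc j) * (z * ffall (z-1) (Suc j))
      - fdiffs (Suc j) f y / fact (Suc j) * (z * ffall z (Suc j))"
    unfolding T1 T2 d by (simp add: algebra_simps)
  also have "\<dots> = fdiffs (Suc (Suc j)) f y * ffall z (Suc (Suc j)) / fact (Suc j)"
  proof -
    have key: "\<And>F G a Q b. G \<noteq> 0 \<Longrightarrow> G = (real j+1)*F \<Longrightarrow> a*Q/F + (a+b)/G*(Q*(z - real(Suc j))) - a/G*(z*Q) = b*(Q*(z-real (Suc j)))/G"
    proof -
      fix F G a Q b :: real assume G: "G \<noteq> 0" "G = (real j+1)*F"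
      then have "F \<noteq> 0" by auto
      then have "a*Q/F = a*Q*(real j+1)/G" using G by (auto simp: field_simps)
      then show "a*Q/F + (a+b)/G*(Q*(z - real(Suc j))) - a/G*(z*Q) = b*(Q*(z-real (Suc j)))/G"
        using G(1) by (simp add: field_simps)
    qed
    show ?thesis unfolding IH f1 f2 by (rule key) simp_all
  qed
  finally show ?case by (simp add: z_def)
qed

lemma fdiffs_quot:
  assumes "\<And>i. i \<le> j \<Longrightarrow> x - y \<noteq> real i"
  shows "fdiffs j (\<lambda>y. f y / (x - y)) y = fact j / ffall (x - y) (j+1) * Tsum f x j y"
  using assms
proof (induction j arbitrary: y)
  case 0 then show ?case by (simp add: Tsum_def ffall_Suc)
next
  case (Suc j)
  define z where "z = x - y"
  have A: "fdiffs j (\<lambda>y. f y / (x - y)) (y+1) = fact j / ffall (z - 1) (j+1) * Tsum f x j (y+1)"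
    using Suc.IH[of "y+1"] Suc.prems[of "Suc _"] by (force simp: z_def algebra_simps)
  have B: "fdiffs j (\<lambda>y. f y / (x - y)) y = fact j / ffall z (j+1) * Tsum f x j y"
    using Suc.IH[of y] Suc.prems by (force simp: z_def)
  have nz1: "ffall z (Suc j) \<noteq> 0" using Suc.prems by (auto simp: ffall_nz z_def)
  have nz2: "ffall (z-1) (Suc j) \<noteq> 0" using Suc.prems[of "Suc _"] by (auto simp: ffall_nz z_def algebra_simps)
  have nz3: "z - real (Suc j) \<noteq> 0" using Suc.prems[of "Suc j"] by (simp add: z_def)
  have zn: "z \<noteq> 0" using Suc.prems[of 0] by (simp add: z_def)
  have f1: "ffall z (Suc (Suc j)) = z * ffall (z-1) (Suc j)" by (rule ffall_Suc')
  have f2: "ffall z (Suc (Suc j)) = ffall z (Suc j) * (z - real (Suc j))" by (rule ffall_Suc)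
  have TS: "z * Tsum f x j (y+1) = z * Tsum f x j y + fdiffs (Suc j) f y * ffall z (Suc j) / fact j"
    using Tsum_step[of x y f j] by (simp add: z_def algebra_simps)
  have T2: "Tsum f x (Suc j) y = Tsum f x j y + fdiffs (Suc j) f y / fact (Suc j) * ffall z (Suc j)"
    by (simp add: Tsum_def z_def)
  have "fdiffs (Suc j) (\<lambda>y. f y / (x - y)) y = fact j / ffall (z - 1) (j+1) * Tsum f x j (y+1) - fact j / ffall z (j+1) * Tsum f x j y"
    by (simp add: fdiffs_Suc A B)
  also have "\<dots> = fact j * (z * Tsum f x j (y+1)) / ffall z (Suc (Suc j)) - fact j * ((z - real (Suc j)) * Tsum f x j y) / ffall z (Suc (Suc j))"
  proof -
    have a: "fact j * (z * Tsum f x j (y+1)) / ffall z (Suc (Suc j)) = fact j / ffall (z - 1) (j+1) * Tsum f x j (y+1)"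
      unfolding f1 using zn nz2 by simp
    have b: "fact j * ((z - real (Suc j)) * Tsum f x j y) / ffall z (Suc (Suc j)) = fact j / ffall z (j+1) * Tsum f x j y"
      unfolding f2 using nz3 nz1 by simp
    show ?thesis unfolding a b ..
  qed
  also have "\<dots> = fact (Suc j) / ffall z (Suc (Suc j)) * Tsum f x (Suc j) y"
  proof -
    have "fact j * (z * Tsum f x j (y+1)) - fact j * ((z - real (Suc j)) * Tsum f x j y) = fact (Suc j) * Tsum f x (Suc j) y"
    proof -
      have "fact (Suc j) * (fdiffs (Suc j) f y / fact (Suc j) * ffall z (Suc j)) = fdiffs (Suc j) f y * ffall z (Suc j)"
        by simp
      moreover have "fact j * (fdiffs (Suc j) f y * ffall z (Suc j) / fact j) = fdiffs (Suc j) f y * ffall z (Suc j)" by simp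
      ultimately show ?thesis unfolding TS T2 by (simp only: fact_Suc of_nat_mult distrib_left) (simp add: algebra_simps)
    qed
    then show ?thesis by (simp add: diff_divide_distrib[symmetric])
  qed
  finally show ?case by (simp add: z_def)
qed


definition PP :: "nat \<Rightarrow> real \<Rightarrow> real" where "PP k x = pochhammer (-x) k"

definition cf :: "nat \<Rightarrow> real \<Rightarrow> nat \<Rightarrow> nat \<Rightarrow> real" where
  "cf N p m k = p ^ m * pochhammer (- real N) m *
     (pochhammer (- real m) k / (pochhammer (- real N) k * fact k) * inverse p ^ k)"

lemma krav_cf: "krav N p m x = (\<Sum>k\<le>m. cf N p m k * PP k x)"
  unfolding krav_def cf_def PP_def sum_distrib_left
  by (rule sum.cong) (auto simp: field_simps)

lemma poch_negN_nz: "k \<le> N \<Longrightarrow> pochhammer (- real N) k \<noteq> (0::real)"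
  by (auto simp: pochhammer_eq_0_iff)

lemma cf_zero: "m < k \<Longrightarrow> cf N p m k = 0"
  by (auto simp: cf_def pochhammer_eq_0_iff)

lemma krav_cfM: "m \<le> M \<Longrightarrow> krav N p m x = (\<Sum>k\<le>M. cf N p m k * PP k x)"
  unfolding krav_cf by (rule sum.mono_neutral_left) (auto simp: cf_zero)

lemma PA: "PP (Suc k) x = PP k x * (real k - x)"
  by (simp add: PP_def pochhammer_rec' algebra_simps)
lemma PB: "PP (Suc k) x = - x * PP k (x - 1)"
  by (simp add: PP_def pochhammer_rec algebra_simps)
lemma PP0[simp]: "PP 0 x = 1" by (simp add: PP_def)

lemma P_nabla: "x * PP k x - x * PP k (x - 1) = real k * PP k x"
proof -
  have "x * PP k (x - 1) = - PP (Suc k) x" by (simp add: PB)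
  then show ?thesis by (simp add: PA algebra_simps)
qed

lemma P_delta: "PP (Suc k) (x + 1) - PP (Suc k) x = - (real k + 1) * PP k x"
  using PB[of k "x+1"] PA[of k x] by (simp add: algebra_simps)

lemma R1:
  assumes "k < N" "p \<noteq> 0"
  shows "cf N p m (Suc k) * ((real k - real N) * (real k + 1) * p) = cf N p m k * (real k - real m)"
proof -
  have w: "pochhammer (- real N) k \<noteq> (0::real)" using assms by (simp add: poch_negN_nz)
  have d: "real k - real N \<noteq> 0" using assms by simp
  have gen: "\<And>A X a W d F k1 q (Q::real). W \<noteq> 0 \<Longrightarrow> F \<noteq> 0 \<Longrightarrow> q \<noteq> 0 \<Longrightarrow> d \<noteq> 0 \<Longrightarrow> k1 \<noteq> 0 \<Longrightarrow>
     A * (a * X / (d * W * (k1 * F)) * (inverse q * Q)) * (d * k1 * q) = A * (X / (W * F) * Q) * a"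
    by (simp add: field_simps inverse_eq_divide)
  have "cf N p m (Suc k) * ((real k - real N) * (real k + 1) * p) =
     (p ^ m * pochhammer (- real N) m) * ((- real m + real k) * pochhammer (- real m) k / ((- real N + real k) * pochhammer (- real N) k * ((real k + 1) * fact k)) * (inverse p * inverse p ^ k)) * ((- real N + real k) * (real k + 1) * p)"
    unfolding cf_def pochhammer_rec'[of "- real N" k] pochhammer_rec'[of "- real m" k] fact_Suc
    by (simp add: algebra_simps)
  also have "\<dots> = (p ^ m * pochhammer (- real N) m) * (pochhammer (- real m) k / (pochhammer (- real N) k * fact k) * inverse p ^ k) * (- real m + real k)"
    by (rule gen) (use w d assms(2) in auto)
  finally show ?thesis by (simp add: cf_def algebra_simps)
qed

lemma R2:
  assumes "1 \<le> m" "p \<noteq> 0"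
  shows "(real k - real m) * cf N p m k = real m * p * (real N - real m + 1) * cf N p (m-1) k"
proof -
  obtain m0 where m: "m = Suc m0" using assms by (cases m) auto
  have e1: "pochhammer (- real m) k * (- real m + real k) = - real m * pochhammer (- real m0) k"
    using pochhammer_rec'[of "- real m" k] pochhammer_rec[of "- real m" k] by (simp add: m algebra_simps)
  have e2: "pochhammer (- real N) m = (- real N + real m0) * pochhammer (- real N) m0"
    by (simp add: m pochhammer_rec')
  show ?thesis
  proof (cases "pochhammer (- real N) k = (0::real)")
    case True then show ?thesis by (simp add: cf_def)
  next
    case False
    have "(real k - real m) * cf N p m k = p ^ m * pochhammer (- real N) m *
     ((pochhammer (- real m) k * (- real m + real k)) / (pochhammer (- real N) k * fact k) * inverse p ^ k)"
      by (simp add: cf_def algebra_simps)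
    also have "\<dots> = real m * p * (real N - real m + 1) * cf N p (m-1) k"
      unfolding e1 e2 using False assms(2) by (simp add: cf_def m field_simps power_Suc)
    finally show ?thesis .
  qed
qed

lemma R3_gen:
  fixes E A P Y p M i N :: real
  assumes "M \<noteq> 0"
  shows "(i+1) * (p*P*((-N+(M-1))*Y) * ((-M+i)*E))
        - p*P*((-N+(M-1))*Y) * (E * ((-N+i)*(i+1)*p))
   = p*(p*P)*((-N+M)*((-N+(M-1))*Y)) * ((-(M+1))*E)
     + (p*(N-M) + M*(1-p)) * (p*P*((-N+(M-1))*Y) * ((-M+i)*E))
     + M*p*(1-p)*(N-M+1) * (P*Y*((-(M-1)+i)*((M-i)/M)*E))"
proof -
  have "M*p*(1-p)*(N-M+1) * (P*Y*((-(M-1)+i)*((M-i)/M)*E))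
     = p*(1-p)*(N-M+1) * (P*Y*((-(M-1)+i)*(M-i)*E))" using assms by (simp add: field_simps)
  then show ?thesis by (simp add: algebra_simps)
qed

lemma R3:
  assumes "1 \<le> m" "i < N" "p \<noteq> 0"
  shows "real (Suc i) * cf N p m (Suc i) - cf N p m i
       = cf N p (Suc m) (Suc i) + kalpha N p m * cf N p m (Suc i) + kbeta N p m * cf N p (m-1) (Suc i)"
proof -
  obtain m0 where m: "m = Suc m0" using assms by (cases m) auto
  define X where "X = pochhammer (- real m) i"
  define W where "W = pochhammer (- real N) i"
  define F where "F = (fact i :: real)"
  define Q where "Q = inverse p ^ i"
  define P where "P = p ^ m0"
  define Y where "Y = pochhammer (- real N) m0"
  define E where "E = X / (((- real N + real i)*W)*((real i+1)*F)) * (inverse p * Q)"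
  have Wn: "W \<noteq> 0" unfolding W_def using assms by (simp add: poch_negN_nz)
  have Fn: "F \<noteq> 0" by (simp add: F_def)
  have dn: "- real N + real i \<noteq> 0" using assms by simp
  have Ym: "pochhammer (- real N) m = (- real N + (real m - 1)) * Y"
    by (simp add: Y_def m pochhammer_rec')
  have c1: "cf N p m (Suc i) = p*P*((- real N + (real m - 1))*Y) * ((- real m + real i)*E)"
    unfolding cf_def Ym E_def
    by (simp add: m P_def X_def W_def F_def Q_def pochhammer_rec' power_Suc algebra_simps)
  have c2: "cf N p m i = p*P*((- real N + (real m - 1))*Y) * (E * ((- real N + real i)*(real i+1)*p))"
  proof -
    have gen2: "\<And>X d W k1 F p (Q::real). d\<noteq>0 \<Longrightarrow> W\<noteq>0 \<Longrightarrow> k1\<noteq>0 \<Longrightarrow> F\<noteq>0 \<Longrightarrow> p\<noteq>0 \<Longrightarrow>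
       X/((d*W)*(k1*F))*(inverse p*Q)*(d*k1*p) = X/(W*F)*Q"
      by (simp add: field_simps)
    have k1: "real i + 1 \<noteq> 0" by linarith
    have "X / (W * F) * Q = E * ((- real N + real i)*(real i+1)*p)"
      unfolding E_def using gen2[OF dn Wn k1 Fn assms(3), of X Q] by simp
    then show ?thesis unfolding cf_def Ym by (simp add: m P_def X_def W_def F_def Q_def power_Suc)
  qed
  have c3: "cf N p (Suc m) (Suc i) = p*(p*P)*((- real N + real m)*((- real N + (real m - 1))*Y)) * ((-(real m+1))*E)"
  proof -
    have a: "pochhammer (- real (Suc m)) (Suc i) = (-(real m + 1)) * X"
      unfolding X_def pochhammer_rec by (simp add: algebra_simps)
    have b: "pochhammer (- real N) (Suc m) = (- real N + real m) * pochhammer (- real N) m"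
      by (simp add: pochhammer_rec')
    show ?thesis unfolding cf_def a b Ym E_def
      by (simp add: m P_def X_def W_def F_def Q_def pochhammer_rec' power_Suc algebra_simps)
  qed
  have c4: "cf N p (m-1) (Suc i) = P*Y*((-(real m-1)+real i)*((real m-real i)/real m)*E)"
  proof -
    have a: "- real m * pochhammer (- real m0) i = (- real m + real i) * X"
      using pochhammer_rec[of "- real m" i] pochhammer_rec'[of "- real m" i]
      by (simp add: X_def m algebra_simps)
    then have a': "pochhammer (- real m0) i = (real m - real i) / real m * X"
      using m by (simp add: field_simps)
    have b: "pochhammer (- real m0) (Suc i) = (- real m0 + real i) * pochhammer (- real m0) i"
      by (simp add: pochhammer_rec')
    have "cf N p (m-1) (Suc i) = P*Y*(((- real m0 + real i) * ((real m - real i) / real m * X)) / (((- real N + real i)*W)*((real i+1)*F)) * (inverse p * Q))"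
      unfolding m diff_Suc_1 cf_def b a' by (simp add: P_def Y_def W_def F_def Q_def pochhammer_rec' power_Suc mult.commute)
    also have "\<dots> = P*Y*((-(real m-1)+real i)*((real m-real i)/real m)*E)"
      unfolding E_def by (simp add: m)
    finally show ?thesis .
  qed
  have mn: "real m \<noteq> 0" using m by simp
  have si: "real (Suc i) = real i + 1" by simp
  show ?thesis unfolding c1 c2 c3 c4 kalpha_def kbeta_def si
    by (rule R3_gen[OF mn])
qed


lemma R3_0:
  assumes "1 \<le> m"
  shows "0 = cf N p (Suc m) 0 + kalpha N p m * cf N p m 0 + kbeta N p m * cf N p (m-1) 0"
proof -
  obtain m0 where m: "m = Suc m0" using assms by (cases m) auto
  show ?thesis unfolding m cf_def kalpha_def kbeta_def
    by (simp add: pochhammer_rec' power_Suc algebra_simps)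
qed

lemma sum_shift_PP:
  assumes "c N = 0" "1 \<le> N"
  shows "(\<Sum>k\<le>N. c k * PP (Suc k) x) = (\<Sum>k\<le>N. (if k = 0 then 0 else c (k-1)) * PP k x)"
proof -
  obtain N' where N: "N = Suc N'" using assms by (cases N) auto
  have "(\<Sum>k\<le>N. c k * PP (Suc k) x) = (\<Sum>k\<le>N'. c k * PP (Suc k) x)"
    unfolding N using assms(1) N by (simp add: sum.atMost_Suc)
  also have "\<dots> = (\<Sum>k\<le>N. (if k = 0 then 0 else c (k-1)) * PP k x)"
    unfolding N sum.atMost_Suc_shift by simp
  finally show ?thesis .
qed

lemma krav_rec:
  assumes "1 \<le> m" "Suc m \<le> N" "p \<noteq> 0"
  shows "x * krav N p m x = krav N p (Suc m) x + kalpha N p m * krav N p m x + kbeta N p m * krav N p (m-1) x"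
proof -
  have N1: "1 \<le> N" using assms by simp
  have "x * krav N p m x = (\<Sum>k\<le>N. cf N p m k * (x * PP k x))"
    using assms by (simp add: krav_cfM[of m N] sum_distrib_left algebra_simps)
  also have "\<dots> = (\<Sum>k\<le>N. real k * cf N p m k * PP k x) - (\<Sum>k\<le>N. cf N p m k * PP (Suc k) x)"
    by (simp add: PA sum_subtractf[symmetric] algebra_simps)
  also have "\<dots> = (\<Sum>k\<le>N. (real k * cf N p m k - (if k = 0 then 0 else cf N p m (k-1))) * PP k x)"
    using sum_shift_PP[of "cf N p m" N x, OF cf_zero N1] assms
    by (simp add: sum_subtractf[symmetric] algebra_simps)
  also have "\<dots> = (\<Sum>k\<le>N. (cf N p (Suc m) k + kalpha N p m * cf N p m k + kbeta N p m * cf N p (m-1) k) * PP k x)"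
  proof (rule sum.cong[OF refl])
    fix k assume k: "k \<in> {..N}"
    show "(real k * cf N p m k - (if k = 0 then 0 else cf N p m (k-1))) * PP k x =
       (cf N p (Suc m) k + kalpha N p m * cf N p m k + kbeta N p m * cf N p (m-1) k) * PP k x"
    proof (cases k)
      case 0 then show ?thesis using R3_0[OF assms(1), of N p] by simp
    next
      case (Suc i)
      then have "i < N" using k by auto
      then show ?thesis using R3[OF assms(1) _ assms(3), of i] Suc by simp
    qed
  qed
  also have "\<dots> = krav N p (Suc m) x + kalpha N p m * krav N p m x + kbeta N p m * krav N p (m-1) x"
    using assms by (simp add: krav_cfM[of _ N] sum.distrib sum_distrib_left algebra_simps)
  finally show ?thesis .
qed

lemma krav0: "krav N p 0 x = 1" by (simp add: krav_def)

lemma krav1: assumes "1 \<le> N" "p \<noteq> 0" shows "krav N p 1 x = x - kalpha N p 0"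
  using assms by (simp add: krav_def kalpha_def field_simps)

lemma krav_nabla:
  assumes "1 \<le> m" "m \<le> N" "p \<noteq> 0"
  shows "x * krav N p m x - x * krav N p m (x - 1) = real m * krav N p m x + real m * p * (real N - real m + 1) * krav N p (m-1) x"
proof -
  have "x * krav N p m x - x * krav N p m (x - 1) = (\<Sum>k\<le>N. cf N p m k * (x * PP k x - x * PP k (x-1)))"
    using assms by (simp add: krav_cfM[of m N] sum_distrib_left sum_subtractf[symmetric] algebra_simps)
  also have "\<dots> = (\<Sum>k\<le>N. (real k - real m) * cf N p m k * PP k x + real m * cf N p m k * PP k x)"
    by (rule sum.cong) (auto simp: P_nabla algebra_simps)
  also have "\<dots> = (\<Sum>k\<le>N. real m * p * (real N - real m + 1) * cf N p (m-1) k * PP k x + real m * cf N p m k * PP k x)"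
    using R2[OF assms(1) assms(3)] by simp
  also have "\<dots> = (\<Sum>k\<le>N. real m * (cf N p m k * PP k x) + (real m * p * (real N - real m + 1)) * (cf N p (m-1) k * PP k x))"
    by (rule sum.cong) (simp_all add: algebra_simps)
  also have "\<dots> = real m * krav N p m x + real m * p * (real N - real m + 1) * krav N p (m-1) x"
    using assms by (simp add: krav_cfM[of _ N] sum.distrib sum_distrib_left)
  finally show ?thesis .
qed

definition Lop :: "nat \<Rightarrow> real \<Rightarrow> (real \<Rightarrow> real) \<Rightarrow> real \<Rightarrow> real" where
  "Lop N p f x = p * (real N - x) * (f (x+1) - f x) + (1 - p) * x * (f (x - 1) - f x)"

lemma Lop_PP: "Lop N p (PP (Suc i)) x = - (real i + 1) * PP (Suc i) x - p * (real i + 1) * (real N - real i) * PP i x"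
proof -
  have a: "PP (Suc i) (x+1) - PP (Suc i) x = - (real i + 1) * PP i x" by (rule P_delta)
  have b: "x * (PP (Suc i) (x - 1) - PP (Suc i) x) = - (real i + 1) * PP (Suc i) x"
    using P_nabla[of x "Suc i"] by (simp add: algebra_simps)
  have c: "(real N - x) * PP i x = (real N - real i) * PP i x + PP (Suc i) x" by (simp add: PA algebra_simps)
  have "Lop N p (PP (Suc i)) x = p * (- (real i + 1)) * ((real N - x) * PP i x) + (1-p) * (x * (PP (Suc i) (x - 1) - PP (Suc i) x))"
    unfolding Lop_def a by (simp add: algebra_simps)
  also have "\<dots> = - (real i + 1) * PP (Suc i) x - p * (real i + 1) * (real N - real i) * PP i x"
    unfolding b c by (simp add: algebra_simps)
  finally show ?thesis .
qed

lemma Lop_sum: "Lop N p (\<lambda>x. \<Sum>k\<in>A. c k * f k x) x = (\<Sum>k\<in>A. c k * Lop N p (f k) x)"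
proof -
  have "(\<Sum>k\<in>A. c k * Lop N p (f k) x) = (\<Sum>k\<in>A. p * (real N - x) * (c k * f k (x+1) - c k * f k x) + (1 - p) * x * (c k * f k (x-1) - c k * f k x))"
    by (rule sum.cong) (simp_all add: Lop_def algebra_simps)
  also have "\<dots> = Lop N p (\<lambda>x. \<Sum>k\<in>A. c k * f k x) x"
    by (simp add: Lop_def sum.distrib sum_subtractf[symmetric] sum_distrib_left right_diff_distrib)
  finally show ?thesis ..
qed

lemma krav_eigen:
  assumes "m \<le> N" "p \<noteq> 0"
  shows "Lop N p (krav N p m) x = - real m * krav N p m x"
proof -
  have kf: "krav N p m = (\<lambda>x. \<Sum>k\<le>N. cf N p m k * PP k x)" using assms by (simp add: krav_cfM[of m N] fun_eq_iff)
  have L: "\<And>k. Lop N p (PP k) x = - real k * PP k x - (if k = 0 then 0 else p * real k * (real N - real (k-1)) * PP (k-1) x)"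
  proof -
    fix k show "Lop N p (PP k) x = - real k * PP k x - (if k = 0 then 0 else p * real k * (real N - real (k-1)) * PP (k-1) x)"
      by (cases k) (simp add: Lop_def, simp add: Lop_PP algebra_simps)
  qed
  have "Lop N p (krav N p m) x = (\<Sum>k\<le>N. cf N p m k * Lop N p (PP k) x)"
    unfolding kf by (rule Lop_sum)
  also have "\<dots> = (\<Sum>k\<le>N. - real k * cf N p m k * PP k x) - (\<Sum>k\<le>N. (if k = 0 then 0 else cf N p m k * p * real k * (real N - real (k-1)) * PP (k-1) x))"
    unfolding L by (simp add: sum_subtractf[symmetric] algebra_simps if_distrib cong: if_cong)
  also have "(\<Sum>k\<le>N. (if k = 0 then 0 else cf N p m k * p * real k * (real N - real (k-1)) * PP (k-1) x))
      = (\<Sum>k<N. cf N p m (Suc k) * p * (real k + 1) * (real N - real k) * PP k x)"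
  proof (cases N)
    case 0 then show ?thesis by simp
  next
    case (Suc N')
    show ?thesis unfolding Suc sum.atMost_Suc_shift lessThan_Suc_atMost by (simp add: add.commute)
  qed
  also have "\<dots> = (\<Sum>k<N. (real m - real k) * cf N p m k * PP k x)"
  proof (rule sum.cong[OF refl])
    fix k assume "k \<in> {..<N}"
    then have "k < N" by simp
    from R1[OF this assms(2), of m]
    have "cf N p m (Suc k) * p * (real k + 1) * (real N - real k) = (real m - real k) * cf N p m k"
      by (simp add: algebra_simps)
    then show "cf N p m (Suc k) * p * (real k + 1) * (real N - real k) * PP k x = (real m - real k) * cf N p m k * PP k x"
      by simp
  qed
  also have "(\<Sum>k\<le>N. - real k * cf N p m k * PP k x) - \<dots> = - real m * (\<Sum>k\<le>N. cf N p m k * PP k x)"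
  proof -
    have cN: "(real m - real N) * cf N p m N = 0"
      using assms(1) by (cases "m = N") (auto simp: cf_zero)
    have f1: "(\<Sum>k\<le>N. - real k * cf N p m k * PP k x) = (\<Sum>k<N. - real k * cf N p m k * PP k x) - real N * cf N p m N * PP N x"
      by (simp add: lessThan_Suc_atMost[symmetric])
    have f2: "real m * (\<Sum>k\<le>N. cf N p m k * PP k x) = real m * (\<Sum>k<N. cf N p m k * PP k x) + real m * cf N p m N * PP N x"
      by (simp add: lessThan_Suc_atMost[symmetric] algebra_simps)
    have f3: "(\<Sum>k<N. - real k * cf N p m k * PP k x) - (\<Sum>k<N. (real m - real k) * cf N p m k * PP k x)
        = - (real m * (\<Sum>k<N. cf N p m k * PP k x))"
      by (simp add: sum_subtractf[symmetric] sum_distrib_left algebra_simps sum_negf)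
    have f4: "real N * cf N p m N * PP N x = real m * cf N p m N * PP N x"
      using cN by (auto simp: algebra_simps)
    show ?thesis using f1 f2 f3 f4 by linarith
  qed
  finally show ?thesis using kf by simp
qed


definition ip :: "nat \<Rightarrow> real \<Rightarrow> (real \<Rightarrow> real) \<Rightarrow> (real \<Rightarrow> real) \<Rightarrow> real" where
  "ip N p f g = (\<Sum>x\<le>N. f (real x) * g (real x) * bweight N p x)"

lemma knorm2_ip: "knorm2 N p m = ip N p (krav N p m) (krav N p m)"
  by (simp add: knorm2_def ip_def power2_eq_square)

lemma bweight_shift:
  assumes "y < N"
  shows "bweight N p (Suc y) * (1 - p) * (real y + 1) = bweight N p y * p * (real N - real y)"
proof -
  obtain N' where N: "N = Suc N'" using assms by (cases N) auto
  have b: "real (N choose Suc y) * (real y + 1) = real (N choose y) * (real N - real y)"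
  proof -
    have "(N' choose y) * N = (N choose Suc y) * Suc y" using Suc_times_binomial_eq[of N' y] N by (simp add: mult.commute)
    have "real (N choose Suc y) * real (Suc y) = real (N choose y) * real (N - y)"
    proof -
      have "(N choose Suc y) * Suc y = (N choose y) * (N - y)"
        using binomial_absorb_comp[of N y] times_binomial_minus1_eq[of "Suc y" N]
        by (metis Suc_times_binomial_eq diff_Suc_1 mult.commute N binomial_absorb_comp)
      then show ?thesis by (metis of_nat_mult)
    qed
    then show ?thesis using assms by (simp add: of_nat_diff add.commute)
  qed
  have e: "N - y = Suc (N - Suc y)" using assms by simp
  have "bweight N p (Suc y) * (1 - p) * (real y + 1) = (real (N choose Suc y) * (real y + 1)) * (p * p ^ y) * ((1 - p) * (1 - p) ^ (N - Suc y))"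
    unfolding bweight_def by (simp add: mult_ac)
  also have "\<dots> = (real (N choose y) * (real N - real y)) * (p * p ^ y) * ((1 - p) * (1 - p) ^ (N - Suc y))"
    by (simp only: b)
  also have "\<dots> = bweight N p y * p * (real N - real y)"
    unfolding bweight_def e by (simp add: mult_ac)
  finally show ?thesis .
qed

definition T1 where "T1 N p f g = (\<Sum>x\<le>N. bweight N p x * p * (real N - real x) * f (real x + 1) * g (real x))"
definition T3 where "T3 N p f g = (\<Sum>x\<le>N. bweight N p x * (p * (real N - real x) + (1 - p) * real x) * f (real x) * g (real x))"

lemma ip_comm: "ip N p f g = ip N p g f" by (simp add: ip_def mult_ac)

lemma ip_Lop_T: "ip N p (Lop N p f) g = T1 N p f g + (\<Sum>x\<le>N. bweight N p x * (1 - p) * real x * f (real x - 1) * g (real x)) - T3 N p f g"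
  unfolding ip_def T1_def T3_def Lop_def sum.distrib[symmetric] sum_subtractf[symmetric]
  by (rule sum.cong) (simp_all add: algebra_simps)

lemma T2_T1:
  assumes "1 \<le> N"
  shows "(\<Sum>x\<le>N. bweight N p x * (1 - p) * real x * f (real x - 1) * g (real x)) = T1 N p g f"
proof -
  obtain N' where N: "N = Suc N'" using assms by (cases N) auto
  have "(\<Sum>x\<le>N. bweight N p x * (1 - p) * real x * f (real x - 1) * g (real x))
      = (\<Sum>y\<le>N'. bweight N p (Suc y) * (1 - p) * (real y + 1) * f (real y) * g (real y + 1))"
    unfolding N sum.atMost_Suc_shift by (simp add: add.commute)
  also have "\<dots> = (\<Sum>y\<le>N'. bweight N p y * p * (real N - real y) * g (real y + 1) * f (real y))"
  proof (rule sum.cong[OF refl])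
    fix y assume "y \<in> {..N'}"
    then have "y < N" using N by auto
    from bweight_shift[OF this, of p] show "bweight N p (Suc y) * (1 - p) * (real y + 1) * f (real y) * g (real y + 1) =
      bweight N p y * p * (real N - real y) * g (real y + 1) * f (real y)" by (simp add: mult_ac)
  qed
  also have "\<dots> = T1 N p g f"
    unfolding T1_def N by (simp add: sum.atMost_Suc)
  finally show ?thesis .
qed

lemma ip_Lop_sym:
  assumes "1 \<le> N"
  shows "ip N p (Lop N p f) g = ip N p f (Lop N p g)"
proof -
  have "T3 N p f g = T3 N p g f" by (simp add: T3_def mult_ac)
  then show ?thesis
    using ip_Lop_T[of N p f g] ip_Lop_T[of N p g f] T2_T1[OF assms, of p f g] T2_T1[OF assms, of p g f] ip_comm[of N p f "Lop N p g"]
    by simp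
qed

lemma krav_orth:
  assumes "m \<le> N" "k \<le> N" "m \<noteq> k" "1 \<le> N" "p \<noteq> 0"
  shows "ip N p (krav N p m) (krav N p k) = 0"
proof -
  have "- real m * ip N p (krav N p m) (krav N p k) = ip N p (Lop N p (krav N p m)) (krav N p k)"
    using krav_eigen[OF assms(1) assms(5)] by (simp add: ip_def sum_distrib_left mult_ac)
  also have "\<dots> = ip N p (krav N p m) (Lop N p (krav N p k))" by (rule ip_Lop_sym[OF assms(4)])
  also have "\<dots> = - real k * ip N p (krav N p m) (krav N p k)"
    using krav_eigen[OF assms(2) assms(5)] by (simp add: ip_def sum_distrib_left mult_ac)
  finally show ?thesis using assms(3) by simp
qed


lemma krav_rec':
  assumes "Suc m \<le> N" "p \<noteq> 0"
  shows "x * krav N p m x = krav N p (Suc m) x + kalpha N p m * krav N p m x + kbeta N p m * krav N p (m-1) x"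
proof (cases "m = 0")
  case True
  then show ?thesis using krav1[of N p x] assms by (simp add: krav0 kbeta_def)
next
  case False
  then show ?thesis using krav_rec[of m N p x] assms by simp
qed

lemma ip_lin3: "ip N p f (\<lambda>x. a * g x + b * h x + c * k x) = a * ip N p f g + b * ip N p f h + c * ip N p f k"
proof -
  have "ip N p f (\<lambda>x. a * g x + b * h x + c * k x) =
     (\<Sum>x\<le>N. a * (f (real x) * g (real x) * bweight N p x) + b * (f (real x) * h (real x) * bweight N p x) + c * (f (real x) * k (real x) * bweight N p x))"
    unfolding ip_def by (rule sum.cong) (simp_all add: algebra_simps)
  then show ?thesis by (simp add: ip_def sum.distrib sum_distrib_left)
qed

lemma ip_xshift: "ip N p (\<lambda>x. x * f x) g = ip N p f (\<lambda>x. x * g x)"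
  by (simp add: ip_def mult_ac)

lemma knorm_chain:
  assumes "1 \<le> m" "Suc m \<le> N" "p \<noteq> 0"
  shows "knorm2 N p m = kbeta N p m * knorm2 N p (m-1)"
proof -
  let ?K = "krav N p"
  have N1: "1 \<le> N" using assms by simp
  have r1: "\<And>x. ?K m x = x * ?K (m-1) x + (- kalpha N p (m-1)) * ?K (m-1) x + (- kbeta N p (m-1)) * ?K (m-1-1) x"
    using krav_rec'[of "m-1" N p] assms by simp
  have r2: "\<And>x. x * ?K m x = 1 * ?K (Suc m) x + kalpha N p m * ?K m x + kbeta N p m * ?K (m-1) x"
    using krav_rec'[of m N p] assms by simp
  have "knorm2 N p m = ip N p (?K m) (?K m)" by (rule knorm2_ip)
  also have "\<dots> = ip N p (?K m) (\<lambda>x. 1 * (x * ?K (m-1) x) + (- kalpha N p (m-1)) * ?K (m-1) x + (- kbeta N p (m-1)) * ?K (m-1-1) x)"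
    by (rule arg_cong[where f = "ip N p (?K m)"]) (rule ext, use r1 in simp)
  also have "\<dots> = ip N p (?K m) (\<lambda>x. x * ?K (m-1) x)"
    unfolding ip_lin3 using krav_orth[of m N "m-1" p] krav_orth[of m N "m-1-1" p] assms N1 by simp
  also have "\<dots> = ip N p (\<lambda>x. x * ?K m x) (?K (m-1))"
    by (simp add: ip_def mult_ac)
  also have "\<dots> = ip N p (?K (m-1)) (\<lambda>x. 1 * ?K (Suc m) x + kalpha N p m * ?K m x + kbeta N p m * ?K (m-1) x)"
    by (simp only: r2 ip_comm[of N p _ "?K (m-1)"])
  also have "\<dots> = kbeta N p m * knorm2 N p (m-1)"
    unfolding ip_lin3 knorm2_ip using krav_orth[of "m-1" N "Suc m" p] krav_orth[of "m-1" N m p] assms N1 by simp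
  finally show ?thesis .
qed

lemma kbeta_pos: "1 \<le> m \<Longrightarrow> m \<le> N \<Longrightarrow> 0 < p \<Longrightarrow> p < 1 \<Longrightarrow> 0 < kbeta N p m"
  by (simp add: kbeta_def)

lemma bweight_pos: "x \<le> N \<Longrightarrow> 0 < p \<Longrightarrow> p < 1 \<Longrightarrow> 0 < bweight N p x"
  by (simp add: bweight_def)

lemma knorm_pos:
  assumes "m < N" "0 < p" "p < 1"
  shows "0 < knorm2 N p m"
  using assms(1)
proof (induction m)
  case 0
  have "0 < (\<Sum>x\<le>N. bweight N p x)"
    by (rule sum_pos2[of _ 0]) (use bweight_pos[of _ N p] assms in \<open>auto intro: less_imp_le\<close>)
  then show ?case by (simp add: knorm2_def krav0)
next
  case (Suc m)
  then show ?case using knorm_chain[of "Suc m" N p] kbeta_pos[of "Suc m" N p] assms by simp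
qed


fun PPp :: "nat \<Rightarrow> real poly" where
  "PPp 0 = 1"
| "PPp (Suc k) = PPp k * [:real k, -1:]"

lemma poly_PPp: "poly (PPp k) x = PP k x"
  by (induction k) (simp_all add: PA algebra_simps)

lemma PPp_deg: "degree (PPp k) = k \<and> coeff (PPp k) k = (-1)^k"
proof (induction k)
  case 0 then show ?case by simp
next
  case (Suc k)
  have nz: "PPp k \<noteq> 0" using Suc by (auto simp: power_0_left)
  have nz2: "[:real k, -1:] \<noteq> 0" by simp
  have d: "degree (PPp (Suc k)) = Suc k" using Suc by (simp only: PPp.simps degree_mult_eq[OF nz nz2]) simp
  moreover have "lead_coeff (PPp (Suc k)) = (-1)^Suc k"
    using Suc by (simp only: PPp.simps lead_coeff_mult) simp
  ultimately show ?case by simp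
qed

definition kp :: "nat \<Rightarrow> real \<Rightarrow> nat \<Rightarrow> real poly" where
  "kp N p m = (\<Sum>k\<le>m. smult (cf N p m k) (PPp k))"

lemma poly_kp: "poly (kp N p m) x = krav N p m x"
  by (simp add: kp_def poly_sum poly_PPp krav_cf)

lemma degree_kp_le: "degree (kp N p m) \<le> m"
  unfolding kp_def
  by (rule degree_sum_le) (auto intro: order.trans[OF degree_smult_le] simp: PPp_deg)

lemma cf_mm: assumes "m \<le> N" "p \<noteq> 0" shows "cf N p m m * (-1)^m = 1"
proof -
  have X: "pochhammer (- real m) m = (-1)^m * (fact m :: real)"
    by (simp add: pochhammer_minus pochhammer_fact)
  have Y: "pochhammer (- real N) m \<noteq> (0::real)" using assms by (simp add: poch_negN_nz)
  show ?thesis unfolding cf_def X using Y assms(2)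
    by (simp add: field_simps power_inverse)
qed

lemma coeff_kp: assumes "m \<le> N" "p \<noteq> 0" shows "coeff (kp N p m) m = 1"
proof -
  have "coeff (kp N p m) m = (\<Sum>k\<le>m. cf N p m k * coeff (PPp k) m)"
    by (simp add: kp_def coeff_sum)
  also have "\<dots> = (\<Sum>k\<in>{m}. cf N p m k * coeff (PPp k) m)"
    by (rule sum.mono_neutral_right) (auto intro!: coeff_eq_0 simp: PPp_deg)
  also have "\<dots> = cf N p m m * coeff (PPp m) m" by simp
  also have "\<dots> = 1" using cf_mm[OF assms] by (simp add: PPp_deg)
  finally show ?thesis .
qed

lemma kp_deg: assumes "m \<le> N" "p \<noteq> 0" shows "degree (kp N p m) = m" "lead_coeff (kp N p m) = 1"
proof -
  show d: "degree (kp N p m) = m"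
    using degree_kp_le[of N p m] coeff_kp[OF assms] le_degree[of "kp N p m" m] by force
  show "lead_coeff (kp N p m) = 1" using d coeff_kp[OF assms] by simp
qed

lemma span_krav:
  assumes "p \<noteq> 0"
  shows "n \<le> Suc N \<Longrightarrow> degree r < n \<Longrightarrow> \<exists>a. \<forall>x. poly r x = (\<Sum>k<n. a k * krav N p k x)"
proof (induction n arbitrary: r)
  case 0 then show ?case by simp
next
  case (Suc n)
  define r' where "r' = r - smult (coeff r n) (kp N p n)"
  have nN: "n \<le> N" using Suc by simp
  have "degree r' \<le> n"
    unfolding r'_def using Suc.prems degree_kp_le[of N p n]
    by (intro degree_diff_le) (auto intro: order.trans[OF degree_smult_le])
  moreover have "coeff r' n = 0" unfolding r'_def using coeff_kp[OF nN assms] by simp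
  ultimately have cases: "r' = 0 \<or> degree r' < n"
    by (metis le_neq_implies_less leading_coeff_0_iff)
  have ex: "\<exists>a. \<forall>x. poly r' x = (\<Sum>k<n. a k * krav N p k x)"
  proof (cases "r' = 0")
    case True then show ?thesis by (intro exI[of _ "\<lambda>_. 0"]) simp
  next
    case False then show ?thesis using cases Suc.IH[of r'] Suc.prems by simp
  qed
  then obtain a where a: "\<And>x. poly r' x = (\<Sum>k<n. a k * krav N p k x)" by blast
  show ?case
  proof (intro exI[of _ "a(n := coeff r n)"] allI)
    fix x
    have "poly r x = poly r' x + coeff r n * krav N p n x" by (simp add: r'_def poly_kp)
    also have "\<dots> = (\<Sum>k<Suc n. (a(n := coeff r n)) k * krav N p k x)"
      by (simp add: a)
    finally show "poly r x = (\<Sum>k<Suc n. (a(n := coeff r n)) k * krav N p k x)" .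
  qed
qed

lemma ip_sum_right: "ip N p f (\<lambda>x. \<Sum>k\<in>A. a k * g k x) = (\<Sum>k\<in>A. a k * ip N p f (g k))"
  unfolding ip_def by (simp add: sum_distrib_left sum_distrib_right mult_ac sum.swap[of _ A])

lemma ip_sum_left: "ip N p (\<lambda>x. \<Sum>k\<in>A. a k * g k x) f = (\<Sum>k\<in>A. a k * ip N p (g k) f)"
  unfolding ip_def by (simp add: sum_distrib_left sum_distrib_right mult_ac sum.swap[of _ A])

lemma ip_cong: "(\<And>x. f x = f' x) \<Longrightarrow> (\<And>x. g x = g' x) \<Longrightarrow> ip N p f g = ip N p f' g'"
  by (simp add: ip_def)

lemma krav_orth_low:
  assumes "m \<le> N" "degree r < m" "0 < p" "p < 1"
  shows "ip N p (krav N p m) (poly r) = 0"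
proof -
  obtain a where a: "\<And>x. poly r x = (\<Sum>k<m. a k * krav N p k x)"
    using span_krav[of p m N r] assms by auto
  have "ip N p (krav N p m) (poly r) = ip N p (krav N p m) (\<lambda>x. \<Sum>k<m. a k * krav N p k x)"
    by (rule ip_cong) (simp_all add: a)
  also have "\<dots> = 0" unfolding ip_sum_right using krav_orth[of m N _ p] assms by simp
  finally show ?thesis .
qed

lemma reproducing:
  assumes "1 \<le> n" "n \<le> N" "degree r < n" "0 < p" "p < 1"
  shows "ip N p (\<lambda>x. \<Sum>k\<le>n-1. krav N p k x * fdiffs j (krav N p k) y / knorm2 N p k) (poly r) = fdiffs j (poly r) y"
proof -
  obtain a where a: "\<And>x. poly r x = (\<Sum>k<n. a k * krav N p k x)"
    using span_krav[of p n N r] assms by auto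
  have S: "{..n-1} = {..<n}" using assms by auto
  have "ip N p (\<lambda>x. \<Sum>k\<le>n-1. krav N p k x * fdiffs j (krav N p k) y / knorm2 N p k) (poly r)
     = ip N p (\<lambda>x. \<Sum>k<n. (fdiffs j (krav N p k) y / knorm2 N p k) * krav N p k x) (\<lambda>x. \<Sum>i<n. a i * krav N p i x)"
    unfolding S by (rule ip_cong) (simp_all add: a mult_ac)
  also have "\<dots> = (\<Sum>k<n. (fdiffs j (krav N p k) y / knorm2 N p k) * (\<Sum>i<n. a i * ip N p (krav N p k) (krav N p i)))"
    unfolding ip_sum_left ip_sum_right ..
  also have "\<dots> = (\<Sum>k<n. (fdiffs j (krav N p k) y / knorm2 N p k) * (a k * knorm2 N p k))"
  proof (rule sum.cong[OF refl])
    fix k assume k: "k \<in> {..<n}"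
    have "(\<Sum>i<n. a i * ip N p (krav N p k) (krav N p i)) = (\<Sum>i<n. if i = k then a k * knorm2 N p k else 0)"
      by (rule sum.cong[OF refl]) (use k assms krav_orth[of k N _ p] in \<open>auto simp: knorm2_ip\<close>)
    also have "\<dots> = a k * knorm2 N p k" using k by simp
    finally show "(fdiffs j (krav N p k) y / knorm2 N p k) * (\<Sum>i<n. a i * ip N p (krav N p k) (krav N p i)) =
       (fdiffs j (krav N p k) y / knorm2 N p k) * (a k * knorm2 N p k)" by simp
  qed
  also have "\<dots> = (\<Sum>k<n. a k * fdiffs j (krav N p k) y)"
  proof (rule sum.cong[OF refl])
    fix k assume "k \<in> {..<n}"
    then have "0 < knorm2 N p k" using knorm_pos[of k N p] assms by auto
    then show "fdiffs j (krav N p k) y / knorm2 N p k * (a k * knorm2 N p k) = a k * fdiffs j (krav N p k) y"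
      by simp
  qed
  also have "\<dots> = fdiffs j (\<lambda>x. \<Sum>k<n. a k * krav N p k x) y"
    by (simp add: fdiffs_sum fdiffs_cmult)
  also have "\<dots> = fdiffs j (poly r) y"
    by (simp add: a[symmetric])
  finally show ?thesis .
qed


lemma CD_mult:
  assumes "Suc m \<le> N" "0 < p" "p < 1"
  shows "(x - y) * (\<Sum>k\<le>m. krav N p k x * krav N p k y / knorm2 N p k)
     = (krav N p (Suc m) x * krav N p m y - krav N p m x * krav N p (Suc m) y) / knorm2 N p m"
  using assms(1)
proof (induction m)
  case 0
  have N1: "1 \<le> N" using 0 by simp
  have h0: "knorm2 N p 0 \<noteq> 0" using knorm_pos[of 0 N p] N1 assms by simp
  show ?case using krav1[OF N1, of p x] krav1[OF N1, of p y] assms h0 by (simp add: krav0 field_simps)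
next
  case (Suc m)
  let ?K = "krav N p"
  have hm: "0 < knorm2 N p m" using knorm_pos[of m N p] Suc assms by simp
  have b: "0 < kbeta N p (Suc m)" using kbeta_pos[of "Suc m" N p] Suc assms by simp
  have ch: "knorm2 N p (Suc m) = kbeta N p (Suc m) * knorm2 N p m"
    using knorm_chain[of "Suc m" N p] Suc assms by simp
  have r: "\<And>t. ?K (Suc (Suc m)) t = (t - kalpha N p (Suc m)) * ?K (Suc m) t - kbeta N p (Suc m) * ?K m t"
    using krav_rec'[of "Suc m" N p] Suc assms by (simp add: algebra_simps)
  have IH: "(x - y) * (\<Sum>k\<le>m. ?K k x * ?K k y / knorm2 N p k) = (?K (Suc m) x * ?K m y - ?K m x * ?K (Suc m) y) / knorm2 N p m"
    using Suc by simp
  have "(x - y) * (\<Sum>k\<le>Suc m. ?K k x * ?K k y / knorm2 N p k) =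
     (?K (Suc m) x * ?K m y - ?K m x * ?K (Suc m) y) / knorm2 N p m + (x - y) * (?K (Suc m) x * ?K (Suc m) y) / (kbeta N p (Suc m) * knorm2 N p m)"
  proof -
    have "(x - y) * (\<Sum>k\<le>Suc m. ?K k x * ?K k y / knorm2 N p k) = (x - y) * (\<Sum>k\<le>m. ?K k x * ?K k y / knorm2 N p k) + (x - y) * (?K (Suc m) x * ?K (Suc m) y) / (kbeta N p (Suc m) * knorm2 N p m)"
      by (simp add: ch distrib_left)
    then show ?thesis by (simp only: IH)
  qed
  also have "\<dots> = (?K (Suc (Suc m)) x * ?K (Suc m) y - ?K (Suc m) x * ?K (Suc (Suc m)) y) / (kbeta N p (Suc m) * knorm2 N p m)"
    unfolding r using hm b by (simp add: field_simps)
  finally show ?case by (simp add: ch)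
qed

definition kerf where "kerf N p n j y x = (\<Sum>k\<le>n-1. krav N p k x * fdiffs j (krav N p k) y / knorm2 N p k)"
definition kerp where "kerp N p n j y = (\<Sum>k\<le>n-1. smult (fdiffs j (krav N p k) y / knorm2 N p k) (kp N p k))"

lemma poly_kerp: "poly (kerp N p n j y) x = kerf N p n j y x"
  by (simp add: kerp_def kerf_def poly_sum poly_kp mult_ac)

lemma degree_kerp: "degree (kerp N p n j y) \<le> n - 1"
  unfolding kerp_def
  by (rule degree_sum_le) (auto intro: order.trans[OF degree_smult_le] order.trans[OF degree_kp_le])

lemma kerf_fun: "kerf N p n j y = (\<lambda>x. \<Sum>k\<le>n-1. (fdiffs j (krav N p k) y / knorm2 N p k) * krav N p k x)"
  by (rule ext) (simp add: kerf_def mult_ac)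

lemma fdiffs_kerf: "fdiffs j (kerf N p n j y) x0 = kker N p (n-1) j j x0 y"
proof -
  have "fdiffs j (kerf N p n j y) x0 = fdiffs j (\<lambda>x. \<Sum>k\<le>n-1. (fdiffs j (krav N p k) y / knorm2 N p k) * krav N p k x) x0"
    by (simp only: kerf_fun)
  also have "\<dots> = kker N p (n-1) j j x0 y"
    by (simp only: fdiffs_sum fdiffs_cmult) (simp add: kker_def mult_ac)
  finally show ?thesis .
qed

lemma kerf_AB:
  assumes "1 \<le> n" "n \<le> N" "0 < p" "p < 1" "ffall (x - y) (j+1) \<noteq> 0"
  shows "kerf N p n j y x = Ascr N p j n x y * krav N p n x + Bscr N p j n x y * krav N p (n-1) x"
proof -
  let ?K = "krav N p"
  let ?h = "knorm2 N p (n-1)"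
  define F where "F = (\<lambda>t. ?K n x * ?K (n-1) t - ?K (n-1) x * ?K n t)"
  have ne: "\<And>i. i \<le> j \<Longrightarrow> x - y \<noteq> real i" using assms(5) by (auto simp: ffall_nz)
  have hpos: "0 < ?h" using knorm_pos[of "n-1" N p] assms by simp
  have Sn: "Suc (n-1) = n" using assms by simp
  have "fdiffs j (\<lambda>t. \<Sum>k\<le>n-1. ?K k x / knorm2 N p k * ?K k t) y = (\<Sum>k\<le>n-1. ?K k x / knorm2 N p k * fdiffs j (?K k) y)"
    by (simp only: fdiffs_sum fdiffs_cmult)
  then have "kerf N p n j y x = fdiffs j (\<lambda>t. \<Sum>k\<le>n-1. ?K k x / knorm2 N p k * ?K k t) y"
    by (simp add: kerf_def)
  also have "\<dots> = fdiffs j (\<lambda>t. (1 / ?h) * (F t / (x - t))) y"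
  proof (rule fdiffs_cong)
    fix i assume i: "i \<le> j"
    have nz: "x - (y + real i) \<noteq> 0" using ne[OF i] by simp
    have "(x - (y + real i)) * (\<Sum>k\<le>n-1. ?K k x * ?K k (y + real i) / knorm2 N p k) = F (y + real i) / ?h"
      using CD_mult[of "n-1" N p x "y + real i"] assms by (simp add: Sn F_def)
    then have "(\<Sum>k\<le>n-1. ?K k x * ?K k (y + real i) / knorm2 N p k) = F (y + real i) / ?h / (x - (y + real i))"
      using nz by (subst nonzero_eq_divide_eq) (simp_all add: mult.commute)
    then show "(\<Sum>k\<le>n-1. ?K k x / knorm2 N p k * ?K k (y + real i)) = 1 / ?h * (F (y + real i) / (x - (y + real i)))"
      by (simp add: mult_ac)
  qed
  also have "\<dots> = (1 / ?h) * (fact j / ffall (x - y) (j+1) * Tsum F x j y)"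
    by (simp only: fdiffs_cmult fdiffs_quot[OF ne])
  also have "\<dots> = Ascr N p j n x y * ?K n x + Bscr N p j n x y * ?K (n-1) x"
  proof -
    have dF: "\<And>k. fdiffs k F y = ?K n x * fdiffs k (?K (n-1)) y - ?K (n-1) x * fdiffs k (?K n) y"
      by (simp add: F_def fdiffs_diff fdiffs_cmult)
    have T: "Tsum F x j y = ?K n x * (\<Sum>k\<le>j. fdiffs k (?K (n-1)) y / fact k * ffall (x - y) k)
        - ?K (n-1) x * (\<Sum>k\<le>j. fdiffs k (?K n) y / fact k * ffall (x - y) k)"
      unfolding Tsum_def dF by (simp add: sum_distrib_left sum_subtractf[symmetric] algebra_simps diff_divide_distrib)
    show ?thesis unfolding T Ascr_def Bscr_def by (simp add: algebra_simps)
  qed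
  finally show ?thesis .
qed


lemma nonneg_csq: "0 < (c::real) \<Longrightarrow> 0 \<le> c * a * a"
  by (metis less_eq_real_def mult.assoc mult_nonneg_nonneg zero_le_square)

lemma Phi_gen:
  fixes d0 dN a b c e lam mu D :: real
  assumes "D \<noteq> 0" "D = (1 + lam * a) * (1 + mu * e) - lam * mu * b * c"
  shows "d0 - lam * ((d0 * (1 + mu * e) - mu * b * dN) / D) * a - mu * (((1 + lam * a) * dN - lam * c * d0) / D) * b
         = (d0 * (1 + mu * e) - mu * b * dN) / D"
    and "dN - lam * ((d0 * (1 + mu * e) - mu * b * dN) / D) * c - mu * (((1 + lam * a) * dN - lam * c * d0) / D) * e
         = ((1 + lam * a) * dN - lam * c * d0) / D"
proof -
  let ?Y1 = "d0 * (1 + mu * e) - mu * b * dN" and ?Y2 = "(1 + lam * a) * dN - lam * c * d0"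
  have y1: "?Y1 / D * D = ?Y1" and y2: "?Y2 / D * D = ?Y2" using assms(1) by simp_all
  have "(d0 - lam * (?Y1 / D) * a - mu * (?Y2 / D) * b) * D = d0 * D - lam * a * (?Y1 / D * D) - mu * b * (?Y2 / D * D)"
    by (simp add: algebra_simps)
  also have "\<dots> = ?Y1" unfolding y1 y2 by (simp add: assms(2) algebra_simps)
  finally show "d0 - lam * (?Y1 / D) * a - mu * (?Y2 / D) * b = ?Y1 / D"
    using assms(1) by (simp add: nonzero_eq_divide_eq)
  have "(dN - lam * (?Y1 / D) * c - mu * (?Y2 / D) * e) * D = dN * D - lam * c * (?Y1 / D * D) - mu * e * (?Y2 / D * D)"
    by (simp add: algebra_simps)
  also have "\<dots> = ?Y2" unfolding y1 y2 by (simp add: assms(2) algebra_simps)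
  finally show "dN - lam * (?Y1 / D) * c - mu * (?Y2 / D) * e = ?Y2 / D"
    using assms(1) by (simp add: nonzero_eq_divide_eq)
qed

lemma CS_weighted:
  fixes a b c :: "nat \<Rightarrow> real"
  assumes "finite A" "\<And>k. k \<in> A \<Longrightarrow> 0 < c k"
  shows "(\<Sum>k\<in>A. c k * a k * b k)^2 \<le> (\<Sum>k\<in>A. c k * a k * a k) * (\<Sum>k\<in>A. c k * b k * b k)"
proof (cases "(\<Sum>k\<in>A. c k * a k * a k) = 0")
  case True
  have "\<forall>k\<in>A. c k * a k * a k = 0"
    using True assms by (subst sum_nonneg_eq_0_iff[symmetric]) (auto intro: nonneg_csq)
  then have "\<forall>k\<in>A. a k = 0" using assms(2) by (metis less_irrefl mult_eq_0_iff)
  then show ?thesis by simp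
next
  case False
  let ?S = "\<Sum>k\<in>A. c k * a k * a k"
  let ?T = "\<Sum>k\<in>A. c k * a k * b k"
  let ?U = "\<Sum>k\<in>A. c k * b k * b k"
  have Spos: "0 < ?S" using False assms
    by (metis (no_types, lifting) less_eq_real_def mult_nonneg_nonneg mult.assoc sum_nonneg zero_le_square)
  define t where "t = ?T / ?S"
  have "0 \<le> (\<Sum>k\<in>A. c k * (b k - t * a k)^2)"
    using assms by (intro sum_nonneg mult_nonneg_nonneg) (auto intro: less_imp_le)
  also have "(\<Sum>k\<in>A. c k * (b k - t * a k)^2) = ?U - 2 * t * ?T + t^2 * ?S"
  proof -
    have "(\<Sum>k\<in>A. c k * (b k - t * a k)^2) = (\<Sum>k\<in>A. c k * b k * b k - (2 * t) * (c k * a k * b k) + t^2 * (c k * a k * a k))"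
      by (rule sum.cong) (simp_all add: power2_eq_square algebra_simps)
    then show ?thesis by (simp add: sum.distrib sum_subtractf sum_distrib_left)
  qed
  also have "\<dots> = ?U - ?T^2 / ?S" using Spos by (simp add: t_def power2_eq_square field_simps)
  finally have "?T^2 / ?S \<le> ?U" by simp
  then show ?thesis using Spos by (simp add: divide_le_eq mult.commute)
qed

locale sob =
  fixes N :: nat and p lam mu :: real and j n :: nat
  assumes p0: "0 < p" and p1: "p < 1" and l0: "0 < lam" and m0: "0 < mu" and n1: "1 \<le> n" and nN: "n \<le> N"
begin

abbreviation "K \<equiv> krav N p"
abbreviation "kk a b \<equiv> kker N p (n-1) j j a b"

lemma kk_sym: "kk a b = kk b a" by (simp add: kker_def mult_ac)

lemma delta_pos: "0 < deltaS N p lam mu j n"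
proof -
  let ?a = "\<lambda>k. fdiffs j (K k) 0" and ?b = "\<lambda>k. fdiffs j (K k) (real N)" and ?c = "\<lambda>k. 1 / knorm2 N p k"
  have cp: "\<And>k. k \<in> {..n-1} \<Longrightarrow> 0 < ?c k" using knorm_pos[of _ N p] p0 p1 n1 nN by fastforce
  have e00: "kk 0 0 = (\<Sum>k\<le>n-1. ?c k * ?a k * ?a k)" unfolding kker_def by (rule sum.cong) auto
  have eNN: "kk (real N) (real N) = (\<Sum>k\<le>n-1. ?c k * ?b k * ?b k)" unfolding kker_def by (rule sum.cong) auto
  have e0N: "kk 0 (real N) = (\<Sum>k\<le>n-1. ?c k * ?a k * ?b k)" unfolding kker_def by (rule sum.cong) auto
  have cs: "(kk 0 (real N))^2 \<le> kk 0 0 * kk (real N) (real N)"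
    unfolding e00 eNN e0N by (rule CS_weighted) (use cp in auto)
  have n00: "0 \<le> kk 0 0" unfolding e00 by (rule sum_nonneg, rule nonneg_csq, rule cp) simp
  have nNN: "0 \<le> kk (real N) (real N)" unfolding eNN by (rule sum_nonneg, rule nonneg_csq, rule cp) simp
  have "deltaS N p lam mu j n = 1 + lam * kk 0 0 + mu * kk (real N) (real N) + lam * mu * (kk 0 0 * kk (real N) (real N) - (kk 0 (real N))^2)"
    unfolding deltaS_def using kk_sym[of "real N" 0] by (simp add: power2_eq_square algebra_simps)
  moreover have "0 \<le> lam * mu * (kk 0 0 * kk (real N) (real N) - (kk 0 (real N))^2)"
    using cs l0 m0 by simp
  moreover have "0 \<le> lam * kk 0 0" "0 \<le> mu * kk (real N) (real N)" using n00 nNN l0 m0 by simp_all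
  ultimately show ?thesis by linarith
qed

definition "qS = kp N p n - (smult (lam * Phi1 N p lam mu j n) (kerp N p n j 0) + smult (mu * Phi2 N p lam mu j n) (kerp N p n j (real N)))"

lemma qS_deg: "degree qS = n" "lead_coeff qS = 1"
proof -
  let ?R = "smult (lam * Phi1 N p lam mu j n) (kerp N p n j 0) + smult (mu * Phi2 N p lam mu j n) (kerp N p n j (real N))"
  have kd: "degree (kp N p n) = n" "lead_coeff (kp N p n) = 1" using kp_deg[OF nN] p0 by auto
  have "degree ?R \<le> n - 1"
    by (intro degree_add_le order.trans[OF degree_smult_le] degree_kerp)
  then have Rd: "degree ?R < n" using n1 by simp
  have "degree (kp N p n + - ?R) = n" by (subst degree_add_eq_left) (simp_all only: degree_minus kd Rd)
  then show d: "degree qS = n" by (simp only: qS_def diff_conv_add_uminus)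
  have "coeff ?R n = 0" using Rd by (intro coeff_eq_0) simp
  then show "lead_coeff qS = 1" using d kd by (simp add: qS_def)
qed

lemma poly_qS: "poly qS x = K n x - lam * Phi1 N p lam mu j n * kerf N p n j 0 x - mu * Phi2 N p lam mu j n * kerf N p n j (real N) x"
  by (simp add: qS_def poly_kerp poly_kp)

lemma poly_qS_fun: "poly qS = (\<lambda>x. K n x - lam * Phi1 N p lam mu j n * kerf N p n j 0 x - mu * Phi2 N p lam mu j n * kerf N p n j (real N) x)"
  by (rule ext) (rule poly_qS)

lemma fd_qS: "fdiffs j (poly qS) y0 = fdiffs j (K n) y0 - lam * Phi1 N p lam mu j n * kk y0 0 - mu * Phi2 N p lam mu j n * kk y0 (real N)"
  unfolding poly_qS_fun by (simp add: fdiffs_diff fdiffs_cmult fdiffs_kerf)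

lemma Phi_eqs: "fdiffs j (poly qS) 0 = Phi1 N p lam mu j n" "fdiffs j (poly qS) (real N) = Phi2 N p lam mu j n"
proof -
  have d: "deltaS N p lam mu j n \<noteq> 0" using delta_pos by simp
  have ds: "deltaS N p lam mu j n = (1 + lam * kk 0 0) * (1 + mu * kk (real N) (real N)) - lam * mu * kk 0 (real N) * kk (real N) 0"
    by (simp add: deltaS_def)
  show "fdiffs j (poly qS) 0 = Phi1 N p lam mu j n"
    unfolding fd_qS Phi1_def Phi2_def by (rule Phi_gen(1)[OF d ds])
  show "fdiffs j (poly qS) (real N) = Phi2 N p lam mu j n"
    unfolding fd_qS Phi1_def Phi2_def by (rule Phi_gen(2)[OF d ds])
qed

end


lemma ip_lin3_left: "ip N p (\<lambda>x. f x - a * g x - b * h x) r = ip N p f r - a * ip N p g r - b * ip N p h r"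
proof -
  have "ip N p (\<lambda>x. f x - a * g x - b * h x) r = (\<Sum>x\<le>N. f (real x) * r (real x) * bweight N p x - a * (g (real x) * r (real x) * bweight N p x) - b * (h (real x) * r (real x) * bweight N p x))"
    unfolding ip_def by (rule sum.cong) (simp_all add: algebra_simps)
  then show ?thesis by (simp add: ip_def sum_subtractf sum_distrib_left)
qed

lemma poly_diff_fun: "poly (f - g :: real poly) = (\<lambda>x. poly f x - poly g x)" by (rule ext) (simp only: poly_diff)

lemma sip_diff: fixes f g :: "real poly" shows "sip N p lam mu j (f - g) r = sip N p lam mu j f r - sip N p lam mu j g r"
proof -
  have s1: "(\<Sum>x\<le>N. poly (f - g) (real x) * poly r (real x) * bweight N p x)
     = (\<Sum>x\<le>N. poly f (real x) * poly r (real x) * bweight N p x) - (\<Sum>x\<le>N. poly g (real x) * poly r (real x) * bweight N p x)"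
    by (simp add: sum_subtractf[symmetric] algebra_simps)
  have fd: "\<And>y. fdiffs j (poly (f - g)) y = fdiffs j (poly f) y - fdiffs j (poly g) y"
    unfolding poly_diff_fun by (rule fdiffs_diff)
  show ?thesis unfolding sip_def s1 fd by (simp add: algebra_simps)
qed

lemma sip_zero:
  assumes "sip N p lam mu j d d = 0" "degree d \<le> N" "0 < p" "p < 1" "0 < lam" "0 < mu"
  shows "d = 0"
proof (rule ccontr)
  assume dn: "d \<noteq> 0"
  let ?S = "\<Sum>x\<le>N. poly d (real x) * poly d (real x) * bweight N p x"
  have nn: "\<And>x. x \<in> {..N} \<Longrightarrow> 0 \<le> poly d (real x) * poly d (real x) * bweight N p x"
    using bweight_pos[of _ N p] assms by (intro mult_nonneg_nonneg zero_le_square less_imp_le) auto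
  have S0: "0 \<le> ?S" using nn by (rule sum_nonneg)
  have t1: "0 \<le> lam * fdiffs j (poly d) 0 * fdiffs j (poly d) 0" using assms by (simp add: nonneg_csq)
  have t2: "0 \<le> mu * fdiffs j (poly d) (real N) * fdiffs j (poly d) (real N)" using assms by (simp add: nonneg_csq)
  have "?S = 0" using assms(1) S0 t1 t2 unfolding sip_def by linarith
  then have "\<forall>x\<in>{..N}. poly d (real x) * poly d (real x) * bweight N p x = 0"
    using nn by (subst sum_nonneg_eq_0_iff[symmetric]) auto
  then have roots: "\<And>x. x \<le> N \<Longrightarrow> poly d (real x) = 0"
    using bweight_pos[of _ N p] assms by fastforce
  have "real ` {..N} \<subseteq> {x. poly d x = 0}" using roots by auto
  then have "card (real ` {..N}) \<le> card {x. poly d x = 0}"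
    by (rule card_mono[OF poly_roots_finite[OF dn]])
  moreover have "card (real ` {..N}) = Suc N" by (simp add: card_image)
  moreover have "card {x. poly d x = 0} \<le> degree d" by (rule card_poly_roots_bound[OF dn])
  ultimately show False using assms(2) by simp
qed

context sob begin

lemma kerf_eta: "kerf N p n j y = (\<lambda>x. \<Sum>k\<le>n-1. krav N p k x * fdiffs j (krav N p k) y / knorm2 N p k)"
  by (rule ext) (simp add: kerf_def)

lemma sip_qS: "degree r < n \<Longrightarrow> sip N p lam mu j qS r = 0"
proof -
  assume r: "degree r < n"
  have rep: "\<And>y. ip N p (kerf N p n j y) (poly r) = fdiffs j (poly r) y"
    unfolding kerf_eta using reproducing[OF n1 nN r p0 p1] .
  have o: "ip N p (K n) (poly r) = 0" using krav_orth_low[OF nN r p0 p1] .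
  have "(\<Sum>x\<le>N. poly qS (real x) * poly r (real x) * bweight N p x) = ip N p (poly qS) (poly r)"
    by (simp add: ip_def)
  also have "\<dots> = - lam * Phi1 N p lam mu j n * fdiffs j (poly r) 0 - mu * Phi2 N p lam mu j n * fdiffs j (poly r) (real N)"
    unfolding poly_qS_fun ip_lin3_left rep o by simp
  finally show ?thesis unfolding sip_def Phi_eqs by simp
qed

lemma KS_eq: "KS N p lam mu j n = qS"
  unfolding KS_def
proof (rule the_equality)
  show "lead_coeff qS = 1 \<and> degree qS = n \<and> (\<forall>r. degree r < n \<longrightarrow> sip N p lam mu j qS r = 0)"
    using qS_deg sip_qS by auto
next
  fix q assume q: "lead_coeff q = 1 \<and> degree q = n \<and> (\<forall>r. degree r < n \<longrightarrow> sip N p lam mu j q r = 0)"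
  let ?d = "q - qS"
  have "degree ?d \<le> n" using q qS_deg by (intro degree_diff_le) auto
  moreover have "coeff ?d n = 0"
  proof -
    have "coeff q n = 1" using q by metis
    moreover have "coeff qS n = 1" using qS_deg by metis
    ultimately show ?thesis by simp
  qed
  ultimately have c: "?d = 0 \<or> degree ?d < n"
    by (metis le_neq_implies_less leading_coeff_0_iff)
  show "q = qS"
  proof (cases "?d = 0")
    case True then show ?thesis by simp
  next
    case False
    then have dl: "degree ?d < n" using c by simp
    have "sip N p lam mu j ?d ?d = 0"
      using q sip_qS[OF dl] dl by (simp add: sip_diff)
    then have "?d = 0" using sip_zero[of N p lam mu j ?d] dl nN p0 p1 l0 m0 by simp
    then show ?thesis using False by simp
  qed
qed

lemma KS_point:
  assumes "ffall x (j+1) \<noteq> 0" "ffall (x - real N) (j+1) \<noteq> 0"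
  shows "poly (KS N p lam mu j n) x = C1 N p lam mu j n x * K n x + D1 N p lam mu j n x * K (n-1) x"
proof -
  have a0: "kerf N p n j 0 x = Ascr N p j n x 0 * K n x + Bscr N p j n x 0 * K (n-1) x"
    using kerf_AB[OF n1 nN p0 p1, of x 0 j] assms by simp
  have aN: "kerf N p n j (real N) x = Ascr N p j n x (real N) * K n x + Bscr N p j n x (real N) * K (n-1) x"
    using kerf_AB[OF n1 nN p0 p1, of x "real N" j] assms by simp
  show ?thesis unfolding KS_eq poly_qS a0 aN C1_def D1_def by (simp add: algebra_simps)
qed

end


lemma final_alg:
  fixes T T0 L11 L11' L21 L21' L12 L22 u2 u1 u0 v1 v0 r :: real
  assumes "L11 \<noteq> 0" "r * L11 = L11 - L11'"
    "T * (u2 - u1) = - L21 * u2 + L11 * v1"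
    "T0 * (u1 - u0) = - L21' * u1 + L11' * v0"
    "T * (v1 - v0) = L22 * u2 - L12 * v1"
  shows "T * T0 * ((u2 - u1) - (u1 - u0))
     + ((T * ((T - T0) + L21' + L12) - r * (T + L12) * T) + (T * (L21 - L21') + L12 * L21 - r * L21 * (T + L12) - L11' * L22)) * (u2 - u1)
     + (T * (L21 - L21') + L12 * L21 - r * L21 * (T + L12) - L11' * L22) * u1 = 0"
  using assms by algebra

lemma final_alg2:
  fixes T T0 L11 L11' L21 L21' L12 L22 u2 u1 u0 v1 v0 :: real
  assumes "L11 \<noteq> 0"
    "T * (u2 - u1) = - L21 * u2 + L11 * v1"
    "T0 * (u1 - u0) = - L21' * u1 + L11' * v0"
    "T * (v1 - v0) = L22 * u2 - L12 * v1"
  shows "T * T0 * ((u2 - u1) - (u1 - u0))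
     + ((T * ((T - T0) + L21' + L12) - (L11 - L11') * (T + L12) * T / L11) + (T * (L21 - L21') + L12 * L21 - (L11 - L11') * L21 * (T + L12) / L11 - L11' * L22)) * (u2 - u1)
     + (T * (L21 - L21') + L12 * L21 - (L11 - L11') * L21 * (T + L12) / L11 - L11' * L22) * u1 = 0"
proof -
  define r where "r = (L11 - L11') / L11"
  have r: "r * L11 = L11 - L11'" using assms(1) by (simp add: r_def)
  have e1: "(L11 - L11') * (T + L12) * T / L11 = r * (T + L12) * T" by (simp add: r_def)
  have e2: "(L11 - L11') * L21 * (T + L12) / L11 = r * L21 * (T + L12)" by (simp add: r_def)
  show ?thesis unfolding e1 e2 by (rule final_alg[OF assms(1) r assms(2-4)])
qed

lemma gen_C:
  fixes t C C0 D D0 Km Km0 Km1 Km10 Km2 m a b al ib pp NN :: real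
  assumes "b * ib = 1"
    "t * Km - t * Km0 = m * Km + m * pp * (NN - m + 1) * Km1"
    "t * Km1 - t * Km10 = (m - 1) * Km1 + (m - 1) * pp * (NN - m + 2) * Km2"
    "t * Km1 = Km + al * Km1 + b * Km2"
  shows "t * ((C * Km + D * Km1) - (C0 * Km0 + D0 * Km10)) =
    (t * (C - C0) + m * C0 - (m - 1) * pp * (NN - m + 2) * D0 * ib) * Km
    + (t * (D - D0) + m * pp * (NN - m + 1) * C0 + (m - 1) * pp * (NN - m + 2) * (t - al) * D0 * ib + (m - 1) * D0) * Km1"
  using assms by algebra

lemma gen_B:
  fixes t v C1' D1' Km Km1 Km2 al b ib :: real
  assumes "b * ib = 1" "v = C1' * Km1 + D1' * Km2" "t * Km1 = Km + al * Km1 + b * Km2"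
  shows "v = (- D1' * ib) * Km + (C1' + (- D1' * ib) * (al - t)) * Km1"
  using assms by algebra

lemma gen_Eq:
  fixes t u u0 v v0 C1 D1 C2 D2 E1 F1 E2 F2 Kn Kn1 :: real
  assumes "u = C1 * Kn + D1 * Kn1" "v = C2 * Kn + D2 * Kn1"
    "t * (u - u0) = E1 * Kn + F1 * Kn1" "t * (v - v0) = E2 * Kn + F2 * Kn1"
  shows "t * (C1 * D2 - C2 * D1) * (u - u0) = - (- (E1 * D2 - F1 * C2)) * u + (- (E1 * D1 - F1 * C1)) * v"
    "t * (C1 * D2 - C2 * D1) * (v - v0) = (E2 * D2 - F2 * C2) * u - (E2 * D1 - F2 * C1) * v"
  using assms by algebra+


definition good :: "nat \<Rightarrow> nat \<Rightarrow> real \<Rightarrow> bool" where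
  "good N j t \<longleftrightarrow> ffall t (j+1) \<noteq> 0 \<and> ffall (t - real N) (j+1) \<noteq> 0"

lemma KS_point':
  assumes "sob N p lam mu m" "good N j t"
  shows "poly (KS N p lam mu j m) t = C1 N p lam mu j m t * krav N p m t + D1 N p lam mu j m t * krav N p (m-1) t"
proof -
  interpret sob N p lam mu j m by fact
  show ?thesis using KS_point assms(2) by (simp add: good_def)
qed

lemma conn_C:
  assumes "sob N p lam mu m" "2 \<le> m" "good N j t" "good N j (t-1)"
  shows "t * (poly (KS N p lam mu j m) t - poly (KS N p lam mu j m) (t-1)) = E1 N p lam mu j m t * krav N p m t + F1 N p lam mu j m t * krav N p (m-1) t"
proof -
  interpret sob N p lam mu j m by fact
  have a1: "poly (KS N p lam mu j m) t = C1 N p lam mu j m t * krav N p m t + D1 N p lam mu j m t * krav N p (m-1) t"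
    by (rule KS_point'[OF assms(1,3)])
  have a0: "poly (KS N p lam mu j m) (t-1) = C1 N p lam mu j m (t-1) * krav N p m (t-1) + D1 N p lam mu j m (t-1) * krav N p (m-1) (t-1)"
    by (rule KS_point'[OF assms(1,4)])
  have pn: "p \<noteq> 0" using p0 by simp
  have n1: "t * krav N p m t - t * krav N p m (t-1) = real m * krav N p m t + real m * p * (real N - real m + 1) * krav N p (m-1) t"
    using krav_nabla[of m N p t] assms(2) nN pn by simp
  have n2: "t * krav N p (m-1) t - t * krav N p (m-1) (t-1) = (real m - 1) * krav N p (m-1) t + (real m - 1) * p * (real N - real m + 2) * krav N p (m-1-1) t"
    using krav_nabla[of "m-1" N p t] assms(2) nN pn by (simp add: of_nat_diff algebra_simps)
  have rec: "t * krav N p (m-1) t = krav N p m t + kalpha N p (m-1) * krav N p (m-1) t + kbeta N p (m-1) * krav N p (m-1-1) t"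
    using krav_rec'[of "m-1" N p t] assms(2) nN pn by simp
  have bpos: "0 < kbeta N p (m-1)" using kbeta_pos[of "m-1" N p] assms(2) nN p0 p1 by simp
  have ib: "kbeta N p (m-1) * inverse (kbeta N p (m-1)) = 1" using bpos by simp
  show ?thesis unfolding a1 a0 E1_def F1_def bdiff_def divide_inverse
    by (rule gen_C[OF ib n1 n2 rec])
qed

lemma conn_B:
  assumes "sob N p lam mu (n-1)" "2 \<le> n" "n \<le> N" "0 < p" "p < 1" "good N j t"
  shows "poly (KS N p lam mu j (n-1)) t = C2 N p lam mu j n t * krav N p n t + D2 N p lam mu j n t * krav N p (n-1) t"
proof -
  have a: "poly (KS N p lam mu j (n-1)) t = C1 N p lam mu j (n-1) t * krav N p (n-1) t + D1 N p lam mu j (n-1) t * krav N p (n-1-1) t"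
    by (rule KS_point'[OF assms(1,6)])
  have pn: "p \<noteq> 0" using assms by simp
  have rec: "t * krav N p (n-1) t = krav N p n t + kalpha N p (n-1) * krav N p (n-1) t + kbeta N p (n-1) * krav N p (n-1-1) t"
    using krav_rec'[of "n-1" N p t] assms pn by simp
  have bpos: "0 < kbeta N p (n-1)" using kbeta_pos[of "n-1" N p] assms by simp
  have ib: "kbeta N p (n-1) * inverse (kbeta N p (n-1)) = 1" using bpos by simp
  show ?thesis unfolding D2_def C2_def divide_inverse
    by (rule gen_B[OF ib a rec])
qed

lemma conn_D:
  assumes "sob N p lam mu (n-1)" "3 \<le> n" "n \<le> N" "0 < p" "p < 1" "good N j t" "good N j (t-1)"
  shows "t * (poly (KS N p lam mu j (n-1)) t - poly (KS N p lam mu j (n-1)) (t-1)) = E2 N p lam mu j n t * krav N p n t + F2 N p lam mu j n t * krav N p (n-1) t"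
proof -
  have a: "t * (poly (KS N p lam mu j (n-1)) t - poly (KS N p lam mu j (n-1)) (t-1)) = E1 N p lam mu j (n-1) t * krav N p (n-1) t + F1 N p lam mu j (n-1) t * krav N p (n-1-1) t"
    by (rule conn_C[OF assms(1) _ assms(6,7)]) (use assms in simp)
  have pn: "p \<noteq> 0" using assms by simp
  have rec: "t * krav N p (n-1) t = krav N p n t + kalpha N p (n-1) * krav N p (n-1) t + kbeta N p (n-1) * krav N p (n-1-1) t"
    using krav_rec'[of "n-1" N p t] assms pn by simp
  have bpos: "0 < kbeta N p (n-1)" using kbeta_pos[of "n-1" N p] assms by simp
  have ib: "kbeta N p (n-1) * inverse (kbeta N p (n-1)) = 1" using bpos by simp
  show ?thesis unfolding F2_def E2_def divide_inverse
    by (rule gen_B[OF ib a rec])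
qed

lemma Eqs:
  assumes "sob N p lam mu n" "sob N p lam mu (n-1)" "3 \<le> n" "n \<le> N" "0 < p" "p < 1" "good N j t" "good N j (t-1)"
  shows "Theta N p lam mu j n t * (poly (KS N p lam mu j n) t - poly (KS N p lam mu j n) (t-1))
      = - Lambda N p lam mu j n 2 1 t * poly (KS N p lam mu j n) t + Lambda N p lam mu j n 1 1 t * poly (KS N p lam mu j (n-1)) t"
    "Theta N p lam mu j n t * (poly (KS N p lam mu j (n-1)) t - poly (KS N p lam mu j (n-1)) (t-1))
      = Lambda N p lam mu j n 2 2 t * poly (KS N p lam mu j n) t - Lambda N p lam mu j n 1 2 t * poly (KS N p lam mu j (n-1)) t"
proof -
  have A: "poly (KS N p lam mu j n) t = C1 N p lam mu j n t * krav N p n t + D1 N p lam mu j n t * krav N p (n-1) t"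
    by (rule KS_point'[OF assms(1,7)])
  have B: "poly (KS N p lam mu j (n-1)) t = C2 N p lam mu j n t * krav N p n t + D2 N p lam mu j n t * krav N p (n-1) t"
    by (rule conn_B) (use assms in auto)
  have C: "t * (poly (KS N p lam mu j n) t - poly (KS N p lam mu j n) (t-1)) = E1 N p lam mu j n t * krav N p n t + F1 N p lam mu j n t * krav N p (n-1) t"
    by (rule conn_C) (use assms in auto)
  have D: "t * (poly (KS N p lam mu j (n-1)) t - poly (KS N p lam mu j (n-1)) (t-1)) = E2 N p lam mu j n t * krav N p n t + F2 N p lam mu j n t * krav N p (n-1) t"
    by (rule conn_D) (use assms in auto)
  note g = gen_Eq[OF A B C D]
  show "Theta N p lam mu j n t * (poly (KS N p lam mu j n) t - poly (KS N p lam mu j n) (t-1))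
      = - Lambda N p lam mu j n 2 1 t * poly (KS N p lam mu j n) t + Lambda N p lam mu j n 1 1 t * poly (KS N p lam mu j (n-1)) t"
    using g(1) by (simp add: Theta_def Lambda_def Esel_def Fsel_def Csel_def Dsel_def)
  show "Theta N p lam mu j n t * (poly (KS N p lam mu j (n-1)) t - poly (KS N p lam mu j (n-1)) (t-1))
      = Lambda N p lam mu j n 2 2 t * poly (KS N p lam mu j n) t - Lambda N p lam mu j n 1 2 t * poly (KS N p lam mu j (n-1)) t"
    using g(2) by (simp add: Theta_def Lambda_def Esel_def Fsel_def Csel_def Dsel_def)
qed

theorem mainTheorem8:
  fixes N n j :: nat and p lam mu x :: real
  assumes "0 < p" and "p < 1" and "0 < lam" and "0 < mu"
    and "3 \<le> n" and "n \<le> N"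
    and "defined_at N j (x + 1)" and "defined_at N j x"
    and "Lambda N p lam mu j n 1 1 (x + 1) \<noteq> 0"
  shows "tF N p lam mu j n x * fdiff (bdiff (poly (KS N p lam mu j n))) x
       + tG N p lam mu j n x * fdiff (poly (KS N p lam mu j n)) x
       + tH N p lam mu j n x * poly (KS N p lam mu j n) x = 0"
proof -
  have s1: "sob N p lam mu n" using assms by unfold_locales auto
  have s2: "sob N p lam mu (n-1)" using assms by unfold_locales auto
  have g2: "good N j (x+1)" "good N j x" using assms(7) by (auto simp: defined_at_def good_def)
  have g1: "good N j (x-1)" using assms(8) by (auto simp: defined_at_def good_def)
  have xx: "x + 1 - 1 = x" by simp
  let ?u = "poly (KS N p lam mu j n)" and ?v = "poly (KS N p lam mu j (n-1))"
  let ?T = "Theta N p lam mu j n" and ?L = "Lambda N p lam mu j n"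
  have g2': "good N j (x+1-1)" using g2(2) by (simp only: xx)
  note E2 = Eqs[OF s1 s2 assms(5,6,1,2) g2(1) g2', unfolded xx]
  note E1 = Eqs(1)[OF s1 s2 assms(5,6,1,2) g2(2) g1]
  have fin: "?T (x+1) * ?T x * ((?u (x+1) - ?u x) - (?u x - ?u (x-1)))
     + ((?T (x+1) * ((?T (x+1) - ?T x) + ?L 2 1 x + ?L 1 2 (x+1)) - (?L 1 1 (x+1) - ?L 1 1 x) * (?T (x+1) + ?L 1 2 (x+1)) * ?T (x+1) / ?L 1 1 (x+1))
       + (?T (x+1) * (?L 2 1 (x+1) - ?L 2 1 x) + ?L 1 2 (x+1) * ?L 2 1 (x+1) - (?L 1 1 (x+1) - ?L 1 1 x) * ?L 2 1 (x+1) * (?T (x+1) + ?L 1 2 (x+1)) / ?L 1 1 (x+1) - ?L 1 1 x * ?L 2 2 (x+1))) * (?u (x+1) - ?u x)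
     + (?T (x+1) * (?L 2 1 (x+1) - ?L 2 1 x) + ?L 1 2 (x+1) * ?L 2 1 (x+1) - (?L 1 1 (x+1) - ?L 1 1 x) * ?L 2 1 (x+1) * (?T (x+1) + ?L 1 2 (x+1)) / ?L 1 1 (x+1) - ?L 1 1 x * ?L 2 2 (x+1)) * ?u x = 0"
    by (rule final_alg2[OF assms(9) E2(1) E1 E2(2)])
  show ?thesis
    unfolding tF_def tG_def tH_def calF_def calG_def calH_def fdiff_def bdiff_def xx
    using fin by (simp add: algebra_simps)
qed


end
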